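(* Let $T\in\mathbb{B}(\mathscr{H})$. Then \[ \omega^{2}(T)+\inf_{x\in\mathscr{H},\ \|x\|=1}\left\{\left|\langle |T||T^*|x,x\rangle-\langle |T|x,x\rangle\langle |T^*|x,x\rangle\right|\right\}\le\frac12\left\||T|^{2}+|T^*|^{2}\right\|. \]
   Context: $\mathbb{B}(\mathscr{H})$ is the algebra of bounded operators on a complex Hilbert space $\mathscr{H}$; $|T|=(T^*T)^{1/2}$, $|T^*|=(TT^* )^{1/2}$; $\omega(T)=\sup_{\|x\|=1}|\langle Tx,x\rangle|$ is the numerical radius, and $\|\cdot\|$ is the operator norm. *)

theory Defs
  imports "HOL-Analysis.Analysis"
begin

class complex_vector = real_vector +
  fixes scaleC :: "complex \<Rightarrow> 'a \<Rightarrow> 'a" (infixr \<open>*\<^sub>C\<close> 75)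
  assumes scaleC_add_right: "a *\<^sub>C (x + y) = a *\<^sub>C x + a *\<^sub>C y"
    and scaleC_add_left: "(a + b) *\<^sub>C x = a *\<^sub>C x + b *\<^sub>C x"
    and scaleC_scaleC: "a *\<^sub>C (b *\<^sub>C x) = (a * b) *\<^sub>C x"
    and scaleC_one: "1 *\<^sub>C x = x"
    and scaleR_scaleC: "scaleR r x = complex_of_real r *\<^sub>C x"

class complex_inner = complex_vector + real_normed_vector +
  fixes cinner :: "'a \<Rightarrow> 'a \<Rightarrow> complex"
  assumes cinner_conj_sym: "cinner x y = cnj (cinner y x)"
    and cinner_add_left: "cinner (x + y) z = cinner x z + cinner y z"
    and cinner_scaleC_left: "cinner (a *\<^sub>C x) y = a * cinner x y"
    and cinner_nonneg: "0 \<le> Re (cinner x x)"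
    and cinner_eq_zero_iff: "cinner x x = 0 \<longleftrightarrow> x = 0"
    and norm_eq_sqrt_cinner: "norm x = sqrt (Re (cinner x x))"

class chilbert_space = complex_inner + complete_space

definition bounded_clinear :: "('a::{complex_vector,real_normed_vector} \<Rightarrow> 'b::{complex_vector,real_normed_vector}) \<Rightarrow> bool"
  where "bounded_clinear T \<longleftrightarrow>
     (\<forall>x y. T (x + y) = T x + T y) \<and> (\<forall>c x. T (c *\<^sub>C x) = c *\<^sub>C T x) \<and>
     (\<exists>K. \<forall>x. norm (T x) \<le> norm x * K)"

definition adj :: "('a::chilbert_space \<Rightarrow> 'a) \<Rightarrow> ('a \<Rightarrow> 'a)"
  where "adj T = (SOME S. \<forall>x y. cinner (T x) y = cinner x (S y))"

definition positive_op :: "('a::chilbert_space \<Rightarrow> 'a) \<Rightarrow> bool"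
  where "positive_op A \<longleftrightarrow> bounded_clinear A \<and>
     (\<forall>x. Im (cinner (A x) x) = 0 \<and> 0 \<le> Re (cinner (A x) x))"

definition op_sqrt :: "('a::chilbert_space \<Rightarrow> 'a) \<Rightarrow> ('a \<Rightarrow> 'a)"
  where "op_sqrt P = (THE R. positive_op R \<and> R \<circ> R = P)"

definition abs_op :: "('a::chilbert_space \<Rightarrow> 'a) \<Rightarrow> ('a \<Rightarrow> 'a)"
  where "abs_op T = op_sqrt (adj T \<circ> T)"

definition numerical_radius :: "('a::chilbert_space \<Rightarrow> 'a) \<Rightarrow> real"
  where "numerical_radius T = (SUP x\<in>{x. norm x = 1}. cmod (cinner (T x) x))"

end

theory Submission
  imports Defs
begin


lemma scaleC_zero_left[simp]: "(0::complex) *\<^sub>C (x::'a::complex_vector) = 0"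
proof -
  have "(0::complex) *\<^sub>C x = (0 + 0) *\<^sub>C x" by simp
  also have "\<dots> = 0 *\<^sub>C x + 0 *\<^sub>C x" by (rule scaleC_add_left)
  finally show ?thesis by simp
qed

lemma scaleC_zero_right[simp]: "(a::complex) *\<^sub>C (0::'a::complex_vector) = 0"
proof -
  have "a *\<^sub>C (0::'a) = a *\<^sub>C (0 + 0)" by simp
  also have "\<dots> = a *\<^sub>C 0 + a *\<^sub>C 0" by (rule scaleC_add_right)
  finally show ?thesis by simp
qed

lemma scaleC_minus_right: "(a::complex) *\<^sub>C (- (x::'a::complex_vector)) = - (a *\<^sub>C x)"
proof -
  have "a *\<^sub>C (- x) + a *\<^sub>C x = 0" by (simp add: scaleC_add_right[symmetric])
  then show ?thesis by (simp add: eq_neg_iff_add_eq_0)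
qed

lemma scaleC_diff_right: "(a::complex) *\<^sub>C ((x::'a::complex_vector) - y) = a *\<^sub>C x - a *\<^sub>C y"
  by (simp only: diff_conv_add_uminus scaleC_add_right scaleC_minus_right)

lemma scaleC_minus_left: "(- a::complex) *\<^sub>C (x::'a::complex_vector) = - (a *\<^sub>C x)"
proof -
  have "(- a) *\<^sub>C x + a *\<^sub>C x = 0" by (simp add: scaleC_add_left[symmetric])
  then show ?thesis by (simp add: eq_neg_iff_add_eq_0)
qed

lemma scaleC_diff_left: "((a::complex) - b) *\<^sub>C (x::'a::complex_vector) = a *\<^sub>C x - b *\<^sub>C x"
  by (simp only: diff_conv_add_uminus scaleC_add_left scaleC_minus_left)

lemma scaleC_of_real: "complex_of_real r *\<^sub>C (x::'a::complex_vector) = r *\<^sub>R x"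
  by (simp add: scaleR_scaleC)

lemma cinner_zero_left[simp]: "cinner 0 (y::'a::complex_inner) = 0"
proof -
  have "cinner (0 + 0) y = cinner 0 y + cinner 0 y" by (rule cinner_add_left)
  then show ?thesis by simp
qed

lemma cinner_zero_right[simp]: "cinner (x::'a::complex_inner) 0 = 0"
  by (subst cinner_conj_sym, simp)

lemma cinner_add_right: "cinner (x::'a::complex_inner) (y + z) = cinner x y + cinner x z"
  by (subst (1 2 3) cinner_conj_sym, simp add: cinner_add_left)

lemma cinner_scaleC_right: "cinner (x::'a::complex_inner) (a *\<^sub>C y) = cnj a * cinner x y"
  by (subst (1 2) cinner_conj_sym, simp add: cinner_scaleC_left)

lemma cinner_minus_left: "cinner (- x::'a::complex_inner) y = - cinner x y"
proof -
  have "cinner (- x) y + cinner x y = 0" by (simp add: cinner_add_left[symmetric])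
  then show ?thesis by (simp add: eq_neg_iff_add_eq_0)
qed

lemma cinner_minus_right: "cinner (x::'a::complex_inner) (- y) = - cinner x y"
proof -
  have "cinner x (- y) + cinner x y = 0" by (simp add: cinner_add_right[symmetric])
  then show ?thesis by (simp add: eq_neg_iff_add_eq_0)
qed

lemma cinner_diff_left: "cinner ((x::'a::complex_inner) - y) z = cinner x z - cinner y z"
  by (simp only: diff_conv_add_uminus cinner_add_left cinner_minus_left)

lemma cinner_diff_right: "cinner (x::'a::complex_inner) (y - z) = cinner x y - cinner x z"
  by (simp only: diff_conv_add_uminus cinner_add_right cinner_minus_right)

lemma cinner_scaleR_left: "cinner (r *\<^sub>R (x::'a::complex_inner)) y = of_real r * cinner x y"
  by (simp add: scaleR_scaleC cinner_scaleC_left)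

lemma cinner_scaleR_right: "cinner (x::'a::complex_inner) (r *\<^sub>R y) = of_real r * cinner x y"
  by (simp add: scaleR_scaleC cinner_scaleC_right)

lemmas cinner_simps = cinner_add_left cinner_add_right cinner_diff_left cinner_diff_right
  cinner_minus_left cinner_minus_right cinner_scaleC_left cinner_scaleC_right
  cinner_scaleR_left cinner_scaleR_right

lemma Im_cinner_self[simp]: "Im (cinner (x::'a::complex_inner) x) = 0"
proof -
  have "Im (cinner x x) = Im (cnj (cinner x x))" by (subst cinner_conj_sym, simp)
  then show ?thesis by simp
qed

lemma cinner_self_eq: "cinner (x::'a::complex_inner) x = complex_of_real ((norm x)\<^sup>2)"
proof -
  have "(norm x)\<^sup>2 = Re (cinner x x)" using norm_eq_sqrt_cinner[of x] cinner_nonneg[of x] by simp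
  then show ?thesis by (simp add: complex_eq_iff)
qed

lemma Re_cinner_self: "Re (cinner (x::'a::complex_inner) x) = (norm x)\<^sup>2"
  by (simp add: cinner_self_eq)

lemma norm_scaleC: "norm (a *\<^sub>C (x::'a::complex_inner)) = cmod a * norm x"
proof -
  have "(norm (a *\<^sub>C x))\<^sup>2 = Re (cinner (a *\<^sub>C x) (a *\<^sub>C x))" by (simp add: Re_cinner_self)
  also have "cinner (a *\<^sub>C x) (a *\<^sub>C x) = (a * cnj a) * cinner x x"
    by (simp add: cinner_scaleC_left cinner_scaleC_right)
  also have "a * cnj a = complex_of_real ((cmod a)\<^sup>2)" by (metis complex_norm_square of_real_power)
  finally have "(norm (a *\<^sub>C x))\<^sup>2 = (cmod a)\<^sup>2 * (norm x)\<^sup>2"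
    by (simp add: cinner_self_eq)
  then have "(norm (a *\<^sub>C x))\<^sup>2 = (cmod a * norm x)\<^sup>2" by (simp add: power_mult_distrib)
  then show ?thesis by (simp add: power2_eq_iff_nonneg)
qed



lemma bcl_add: "bounded_clinear T \<Longrightarrow> T (x + y) = T x + T y"
  by (simp add: bounded_clinear_def)
lemma bcl_scaleC: "bounded_clinear T \<Longrightarrow> T (c *\<^sub>C x) = c *\<^sub>C T x"
  by (simp add: bounded_clinear_def)
lemma bcl_bound: "bounded_clinear T \<Longrightarrow> \<exists>K. \<forall>x. norm (T x) \<le> norm x * K"
  by (simp add: bounded_clinear_def)
lemma bcl_scaleR: "bounded_clinear T \<Longrightarrow> T (r *\<^sub>R x) = r *\<^sub>R T x"
  by (simp add: scaleR_scaleC bcl_scaleC)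
lemma bcl_bounded_linear: "bounded_clinear (T::'a::{complex_vector,real_normed_vector} \<Rightarrow> 'b::{complex_vector,real_normed_vector}) \<Longrightarrow> bounded_linear T"
proof -
  assume bT: "bounded_clinear T"
  then obtain K where K: "\<forall>x. norm (T x) \<le> norm x * K" using bcl_bound by blast
  show ?thesis
    by (rule bounded_linear_intro[where K=K]) (use bT K in \<open>auto simp: bcl_add bcl_scaleR\<close>)
qed
lemma bcl_zero: "bounded_clinear T \<Longrightarrow> T 0 = 0"
  using bcl_bounded_linear linear_simps(3) bounded_linear.linear by blast
lemma bcl_minus: "bounded_clinear T \<Longrightarrow> T (- x) = - T x"
  using bcl_bounded_linear linear_simps(4) bounded_linear.linear by blast
lemma bcl_diff: "bounded_clinear T \<Longrightarrow> T (x - y) = T x - T y"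
  using bcl_bounded_linear linear_simps(2) bounded_linear.linear by blast
lemma bcl_pos_bound: "bounded_clinear T \<Longrightarrow> \<exists>K>0. \<forall>x. norm (T x) \<le> norm x * K"
  using bcl_bounded_linear bounded_linear.pos_bounded by blast

lemma bcl_id: "bounded_clinear (\<lambda>x. x)"
  unfolding bounded_clinear_def by (auto intro: exI[of _ 1])

lemma bcl_comp: "bounded_clinear A \<Longrightarrow> bounded_clinear B \<Longrightarrow> bounded_clinear (\<lambda>x. A (B x))"
proof -
  assume a: "bounded_clinear A" and b: "bounded_clinear B"
  obtain KA where KA: "\<forall>x. norm (A x) \<le> norm x * KA" "KA > 0" using bcl_pos_bound[OF a] by blast
  obtain KB where KB: "\<forall>x. norm (B x) \<le> norm x * KB" "KB > 0" using bcl_pos_bound[OF b] by blast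
  have "norm (A (B x)) \<le> norm x * (KB * KA)" for x
  proof -
    have "norm (A (B x)) \<le> norm (B x) * KA" using KA by blast
    also have "\<dots> \<le> (norm x * KB) * KA" using KB KA(2) by (simp add: mult_right_mono)
    finally show ?thesis by (simp add: mult.assoc)
  qed
  then show ?thesis using a b unfolding bounded_clinear_def by auto
qed

lemma bcl_add_op: "bounded_clinear A \<Longrightarrow> bounded_clinear B \<Longrightarrow> bounded_clinear (\<lambda>x. A x + B x)"
proof -
  assume a: "bounded_clinear A" and b: "bounded_clinear B"
  obtain KA where KA: "\<forall>x. norm (A x) \<le> norm x * KA" "KA > 0" using bcl_pos_bound[OF a] by blast
  obtain KB where KB: "\<forall>x. norm (B x) \<le> norm x * KB" "KB > 0" using bcl_pos_bound[OF b] by blast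
  have "norm (A x + B x) \<le> norm x * (KA + KB)" for x
    using norm_triangle_le[of "A x" "B x"] KA(1)[rule_format, of x] KB(1)[rule_format, of x]
    by (simp add: distrib_left)
  moreover have "A (c *\<^sub>C x) + B (c *\<^sub>C x) = c *\<^sub>C (A x + B x)" for c x
    using a b by (simp add: bcl_scaleC scaleC_add_right)
  ultimately show ?thesis using a b unfolding bounded_clinear_def
    by (intro conjI allI exI[of _ "KA + KB"]) (simp_all add: algebra_simps)
qed

lemma bcl_diff_op: "bounded_clinear A \<Longrightarrow> bounded_clinear B \<Longrightarrow> bounded_clinear (\<lambda>x. A x - B x)"
proof -
  assume a: "bounded_clinear A" and b: "bounded_clinear B"
  obtain KA where KA: "\<forall>x. norm (A x) \<le> norm x * KA" "KA > 0" using bcl_pos_bound[OF a] by blast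
  obtain KB where KB: "\<forall>x. norm (B x) \<le> norm x * KB" "KB > 0" using bcl_pos_bound[OF b] by blast
  have "norm (A x - B x) \<le> norm x * (KA + KB)" for x
    using norm_triangle_ineq4[of "A x" "B x"] KA(1)[rule_format, of x] KB(1)[rule_format, of x]
    by (simp add: distrib_left)
  moreover have "A (c *\<^sub>C x) - B (c *\<^sub>C x) = c *\<^sub>C (A x - B x)" for c x
    using a b by (simp add: bcl_scaleC scaleC_diff_right)
  ultimately show ?thesis using a b unfolding bounded_clinear_def
    by (intro conjI allI exI[of _ "KA + KB"]) (simp_all add: algebra_simps)
qed

lemma bcl_scaleR_op: "bounded_clinear A \<Longrightarrow> bounded_clinear (\<lambda>x. r *\<^sub>R A x)"
proof -
  assume a: "bounded_clinear A"
  obtain KA where KA: "\<forall>x. norm (A x) \<le> norm x * KA" "KA > 0" using bcl_pos_bound[OF a] by blast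
  have "norm (r *\<^sub>R A x) \<le> norm x * (\<bar>r\<bar> * KA)" for x
    using KA(1)[rule_format, of x] by (simp add: mult_left_mono mult.left_commute)
  moreover have "r *\<^sub>R A (c *\<^sub>C x) = c *\<^sub>C (r *\<^sub>R A x)" for c x
    using a by (simp add: bcl_scaleC scaleR_scaleC scaleC_scaleC mult.commute)
  ultimately show ?thesis using a unfolding bounded_clinear_def by (auto simp: scaleR_add_right)
qed

definition selfadj :: "('a::complex_inner \<Rightarrow> 'a) \<Rightarrow> bool"
  where "selfadj A \<longleftrightarrow> (\<forall>x y. cinner (A x) y = cinner x (A y))"

definition posf :: "('a::complex_inner \<Rightarrow> 'a) \<Rightarrow> bool"
  where "posf A \<longleftrightarrow> (\<forall>x. 0 \<le> Re (cinner (A x) x))"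

lemma selfadj_real: "selfadj A \<Longrightarrow> Im (cinner (A x) x) = 0"
proof -
  assume "selfadj A"
  then have "cinner (A x) x = cnj (cinner (A x) x)"
    by (metis cinner_conj_sym selfadj_def)
  then show ?thesis by (metis cnj.sel(2) equation_minus_iff neg_equal_zero)
qed

lemma selfadj_real': "selfadj A \<Longrightarrow> cinner (A x) x = complex_of_real (Re (cinner (A x) x))"
  using selfadj_real by (simp add: complex_eq_iff)

lemma positive_selfadj:
  assumes "positive_op A" shows "selfadj A"
proof -
  have bA: "bounded_clinear A" and r: "\<And>x. Im (cinner (A x) x) = 0"
    using assms unfolding positive_op_def by auto
  define f where "f x y = cinner (A x) y - cinner x (A y)" for x y
  have f0: "f x x = 0" for x
  proof -
    have "cinner x (A x) = cnj (cinner (A x) x)" by (rule cinner_conj_sym)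
    also have "\<dots> = cinner (A x) x" using r[of x] by (simp add: complex_eq_iff)
    finally show ?thesis by (simp add: f_def)
  qed
  have fadd: "f (x + y) (x + y) = f x x + f x y + f y x + f y y" for x y
    by (simp add: f_def bcl_add[OF bA] cinner_add_left cinner_add_right algebra_simps)
  have fsc: "f (x + c *\<^sub>C y) (x + c *\<^sub>C y) = f x x + cnj c * f x y + c * f y x + (c * cnj c) * f y y" for x y c
    by (simp add: f_def bcl_add[OF bA] bcl_scaleC[OF bA] cinner_add_left cinner_add_right
        cinner_scaleC_left cinner_scaleC_right algebra_simps)
  have "f x y = 0" for x y
  proof -
    have 1: "f x y + f y x = 0" using fadd[of x y] f0 by simp
    have 2: "- \<i> * f x y + \<i> * f y x = 0" using fsc[of x \<i> y] f0 by simp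
    from 1 2 show ?thesis by (metis add.inverse_neutral add_cancel_right_right add_eq_0_iff2
        complex_i_not_zero distrib_left mult_minus_left mult_zero_right no_zero_divisors
        one_add_one zero_neq_numeral)
  qed
  then show ?thesis unfolding selfadj_def f_def by simp
qed



lemma quad_nonneg_imp:
  fixes a b k :: real
  assumes "\<And>t. 0 \<le> a - 2 * t * k + t\<^sup>2 * k * b" "0 \<le> k" "0 \<le> b"
  shows "k \<le> a * b"
proof (cases "b = 0")
  case True
  show ?thesis
  proof (rule ccontr)
    assume "\<not> k \<le> a * b"
    then have k: "k > 0" using True by simp
    have "0 \<le> a - 2 * ((a + 1) / (2 * k)) * k" using assms(1)[of "(a+1)/(2*k)"] True by simp
    also have "\<dots> = -1" using k by (simp add: field_simps)
    finally show False by simp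
  qed
next
  case False
  then have b: "b > 0" using assms(3) by simp
  have "0 \<le> a - 2 * (1/b) * k + (1/b)\<^sup>2 * k * b" by (rule assms(1))
  also have "\<dots> = a - k / b" using b by (simp add: field_simps power2_eq_square)
  finally have "k / b \<le> a" by simp
  then show ?thesis using b by (simp add: field_simps mult.commute)
qed

lemma gen_cs:
  assumes bA: "bounded_clinear A" and sA: "selfadj A" and pA: "posf A"
  shows "(cmod (cinner (A x) y))\<^sup>2 \<le> Re (cinner (A x) x) * Re (cinner (A y) y)"
proof -
  define c where "c = cinner (A x) y"
  have cy: "cinner (A y) x = cnj c"
    using sA unfolding selfadj_def c_def by (metis cinner_conj_sym)
  have ex: "cinner (A (x - s *\<^sub>C y)) (x - s *\<^sub>C y) =
      cinner (A x) x - cnj s * c - s * cnj c + s * cnj s * cinner (A y) y" for s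
    by (simp add: bcl_diff[OF bA] bcl_scaleC[OF bA] cinner_diff_left cinner_diff_right
        cinner_scaleC_left cinner_scaleC_right c_def[symmetric] cy algebra_simps)
  have ccn: "c * cnj c = complex_of_real ((cmod c)\<^sup>2)" by (metis complex_norm_square of_real_power)
  have "0 \<le> Re (cinner (A x) x) - 2 * t * (cmod c)\<^sup>2 + t\<^sup>2 * (cmod c)\<^sup>2 * Re (cinner (A y) y)" for t
  proof -
    define s where "s = complex_of_real t * c"
    have 1: "cnj s * c = complex_of_real (t * (cmod c)\<^sup>2)"
      unfolding s_def using ccn by (simp add: mult.commute mult.left_commute)
    have 2: "s * cnj c = complex_of_real (t * (cmod c)\<^sup>2)"
      unfolding s_def using ccn by (simp add: mult.assoc)
    have 3: "s * cnj s = complex_of_real (t\<^sup>2 * (cmod c)\<^sup>2)"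
      unfolding s_def using ccn by (simp add: power2_eq_square mult.commute mult.left_commute)
    have "0 \<le> Re (cinner (A (x - s *\<^sub>C y)) (x - s *\<^sub>C y))" using pA unfolding posf_def by blast
    also have "\<dots> = Re (cinner (A x) x) - 2 * t * (cmod c)\<^sup>2 + t\<^sup>2 * (cmod c)\<^sup>2 * Re (cinner (A y) y)"
      unfolding ex 1 2 3 by simp
    finally show ?thesis .
  qed
  then have "(cmod c)\<^sup>2 \<le> Re (cinner (A x) x) * Re (cinner (A y) y)"
    by (rule quad_nonneg_imp) (use pA in \<open>auto simp: posf_def\<close>)
  then show ?thesis by (simp add: c_def)
qed

lemma selfadj_id: "selfadj (\<lambda>x. x)" by (simp add: selfadj_def)
lemma posf_id: "posf (\<lambda>x. x)" by (simp add: posf_def cinner_nonneg)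

lemma cauchy_schwarz: "cmod (cinner x y) \<le> norm x * norm (y::'a::complex_inner)"
proof -
  have "(cmod (cinner x y))\<^sup>2 \<le> (norm x)\<^sup>2 * (norm y)\<^sup>2"
    using gen_cs[OF bcl_id selfadj_id posf_id, of x y] by (simp add: Re_cinner_self)
  then have "(cmod (cinner x y))\<^sup>2 \<le> (norm x * norm y)\<^sup>2" by (simp add: power_mult_distrib)
  then show ?thesis by (rule power2_le_imp_le) simp
qed

lemma Re_cinner_le: "Re (cinner x y) \<le> norm x * norm (y::'a::complex_inner)"
  using cauchy_schwarz[of x y] complex_Re_le_cmod order_trans by blast

lemma tendsto_cinner_left:
  assumes "(f \<longlongrightarrow> a) F" shows "((\<lambda>n. cinner (f n) y) \<longlongrightarrow> cinner a (y::'a::complex_inner)) F"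
proof -
  have "((\<lambda>n. f n - a) \<longlongrightarrow> 0) F" using assms by (rule LIM_zero)
  then have "((\<lambda>n. norm (f n - a)) \<longlongrightarrow> 0) F" by (rule tendsto_norm_zero)
  then have g: "((\<lambda>n. norm (f n - a) * norm y) \<longlongrightarrow> 0) F" by (rule tendsto_mult_left_zero)
  have "((\<lambda>n. cinner (f n) y - cinner a y) \<longlongrightarrow> 0) F"
  proof (rule Lim_null_comparison[OF _ g])
    show "\<forall>\<^sub>F n in F. norm (cinner (f n) y - cinner a y) \<le> norm (f n - a) * norm y"
      by (rule always_eventually, rule allI) (metis cauchy_schwarz cinner_diff_left)
  qed
  then show ?thesis by (rule LIM_zero_cancel)
qed

lemma tendsto_cinner_right:
  assumes "(f \<longlongrightarrow> a) F" shows "((\<lambda>n. cinner y (f n)) \<longlongrightarrow> cinner (y::'a::complex_inner) a) F"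
proof -
  have "((\<lambda>n. cnj (cinner (f n) y)) \<longlongrightarrow> cnj (cinner a y)) F"
    by (intro tendsto_cnj tendsto_cinner_left assms)
  then show ?thesis by (subst (1 2) cinner_conj_sym) (simp add: cinner_conj_sym[symmetric])
qed

lemma cmod_cinner_self: "cmod (cinner z z) = (norm (z::'a::complex_inner))\<^sup>2"
  by (simp only: cinner_self_eq norm_of_real) simp

lemma posf_norm_sq:
  assumes bX: "bounded_clinear X" and sX: "selfadj X" and pX: "posf X"
    and c: "\<And>z. norm (X z) \<le> c * norm z"
  shows "(norm (X x))\<^sup>2 \<le> c * Re (cinner (X x) x)"
proof -
  have "(cmod (cinner (X x) (X x)))\<^sup>2 \<le> Re (cinner (X x) x) * Re (cinner (X (X x)) (X x))"
    by (rule gen_cs[OF bX sX pX])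
  also have "Re (cinner (X (X x)) (X x)) \<le> c * (norm (X x))\<^sup>2"
  proof -
    have "Re (cinner (X (X x)) (X x)) \<le> norm (X (X x)) * norm (X x)" by (rule Re_cinner_le)
    also have "\<dots> \<le> c * norm (X x) * norm (X x)" by (rule mult_right_mono[OF c]) simp
    finally show ?thesis by (simp add: power2_eq_square mult.assoc)
  qed
  then have "Re (cinner (X x) x) * Re (cinner (X (X x)) (X x)) \<le> Re (cinner (X x) x) * (c * (norm (X x))\<^sup>2)"
    using pX unfolding posf_def by (simp add: mult_left_mono)
  finally have "((norm (X x))\<^sup>2)\<^sup>2 \<le> (c * Re (cinner (X x) x)) * (norm (X x))\<^sup>2"
    by (simp only: cmod_cinner_self mult_ac)
  then show ?thesis
    by (cases "norm (X x) = 0") (auto simp: power2_eq_square)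
qed



lemma cinner_expand:
  "cinner (x - s *\<^sub>C y) (x - s *\<^sub>C y) =
   cinner x x - cnj s * cinner x y - s * cinner y x + s * cnj s * cinner (y::'a::complex_inner) y"
  by (simp add: cinner_diff_left cinner_diff_right cinner_scaleC_left cinner_scaleC_right algebra_simps)

lemma parallelogram:
  "(norm (a - b))\<^sup>2 + (norm (a + b))\<^sup>2 = 2 * (norm a)\<^sup>2 + 2 * (norm (b::'a::complex_inner))\<^sup>2"
proof -
  have e: "cinner (a - b) (a - b) + cinner (a + b) (a + b) = 2 * cinner a a + 2 * cinner b b"
    by (simp add: cinner_diff_left cinner_diff_right cinner_add_left cinner_add_right algebra_simps)
  have "Re (cinner (a - b) (a - b) + cinner (a + b) (a + b)) = Re (2 * cinner a a + 2 * cinner b b)"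
    by (simp only: e)
  then have "Re (cinner (a - b) (a - b)) + Re (cinner (a + b) (a + b)) = 2 * Re (cinner a a) + 2 * Re (cinner b b)"
    by simp
  then show ?thesis by (simp add: Re_cinner_self)
qed

lemma cinner_ext: "(\<And>x. cinner x a = cinner x b) \<Longrightarrow> a = (b::'a::complex_inner)"
proof -
  assume h: "\<And>x. cinner x a = cinner x b"
  have "cinner (a - b) (a - b) = 0" using h[of "a - b"] by (simp add: cinner_diff_right)
  then show ?thesis by (simp add: cinner_eq_zero_iff)
qed

lemma proj_orth:
  fixes K :: "'a::chilbert_space set"
  assumes cK: "closed K" and zK: "0 \<in> K" and aK: "\<And>x y. x \<in> K \<Longrightarrow> y \<in> K \<Longrightarrow> x + y \<in> K"
    and sK: "\<And>c x. x \<in> K \<Longrightarrow> c *\<^sub>C x \<in> K" and uK: "u \<notin> K"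
  shows "\<exists>w. w \<noteq> 0 \<and> (\<forall>k\<in>K. cinner k w = 0)"
proof -
  have mK: "x - y \<in> K" if "x \<in> K" "y \<in> K" for x y
  proof -
    have "(-1::complex) *\<^sub>C y \<in> K" using sK that by blast
    then have "- y \<in> K" by (simp add: scaleC_minus_left scaleC_one)
    then show ?thesis using aK[OF that(1)] by (simp only: diff_conv_add_uminus)
  qed
  have rK: "r *\<^sub>R x \<in> K" if "x \<in> K" for r x using sK[OF that, of "of_real r"] by (simp add: scaleC_of_real)
  define d where "d = Inf ((\<lambda>k. norm (u - k)) ` K)"
  have bdd: "bdd_below ((\<lambda>k. norm (u - k)) ` K)" by (rule bdd_belowI[of _ 0]) auto
  have dle: "d \<le> norm (u - k)" if "k \<in> K" for k
    unfolding d_def using bdd that by (simp add: cInf_lower)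
  have d0: "0 \<le> d" unfolding d_def using zK by (intro cInf_greatest) auto
  have "\<exists>k\<in>K. norm (u - k) < sqrt (d\<^sup>2 + 1 / (Suc n))" for n
  proof -
    have "d < sqrt (d\<^sup>2 + 1 / (Suc n))"
      using d0 by (metis add_strict_left_mono of_nat_0_less_iff real_sqrt_less_mono
          real_sqrt_abs abs_of_nonneg zero_less_Suc zero_less_divide_1_iff add_0_right)
    then have "Inf ((\<lambda>k. norm (u - k)) ` K) < sqrt (d\<^sup>2 + 1 / (Suc n))" by (simp add: d_def)
    then obtain v where "v \<in> (\<lambda>k. norm (u - k)) ` K" "v < sqrt (d\<^sup>2 + 1 / (Suc n))"
      using cInf_lessD[of "(\<lambda>k. norm (u - k)) ` K"] zK by blast
    then show ?thesis by blast
  qed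
  then obtain ks where ksK: "\<And>n. ks n \<in> K" and ksd: "\<And>n. norm (u - ks n) < sqrt (d\<^sup>2 + 1 / (Suc n))"
    by metis
  have ksd2: "(norm (u - ks n))\<^sup>2 \<le> d\<^sup>2 + 1 / (Suc n)" for n
  proof -
    have "(norm (u - ks n))\<^sup>2 \<le> (sqrt (d\<^sup>2 + 1 / (Suc n)))\<^sup>2"
      using ksd[of n] by (intro power_mono) auto
    then show ?thesis by simp
  qed
  have cd: "(norm (ks m - ks n))\<^sup>2 \<le> 2 / Suc n + 2 / Suc m" for m n
  proof -
    have mid: "(1/2) *\<^sub>R (ks n + ks m) \<in> K" using ksK aK rK by blast
    have "u - ks n + (u - ks m) = 2 *\<^sub>R (u - (1/2) *\<^sub>R (ks n + ks m))"
      by (simp add: scaleR_diff_right scaleR_2)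
    then have "norm (u - ks n + (u - ks m)) = 2 * norm (u - (1/2) *\<^sub>R (ks n + ks m))" by simp
    then have "norm (u - ks n + (u - ks m)) \<ge> 2 * d" using dle[OF mid] by simp
    then have "(norm (u - ks n + (u - ks m)))\<^sup>2 \<ge> (2 * d)\<^sup>2" using d0 by (intro power_mono) auto
    moreover have "(norm (u - ks n - (u - ks m)))\<^sup>2 + (norm (u - ks n + (u - ks m)))\<^sup>2
        = 2 * (norm (u - ks n))\<^sup>2 + 2 * (norm (u - ks m))\<^sup>2" by (rule parallelogram)
    moreover have "u - ks n - (u - ks m) = ks m - ks n" by simp
    ultimately show ?thesis using ksd2[of n] ksd2[of m] by (simp add: power_mult_distrib)
  qed
  have "Cauchy ks"
  proof (rule metric_CauchyI)
    fix e :: real assume e: "e > 0"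
    obtain N :: nat where N: "4 / e\<^sup>2 < N" using reals_Archimedean2 by blast
    have Npos: "4 / Suc N < e\<^sup>2"
    proof -
      have "4 / e\<^sup>2 < Suc N" using N by simp
      then show ?thesis using e by (simp add: field_simps)
    qed
    show "\<exists>M. \<forall>m\<ge>M. \<forall>n\<ge>M. dist (ks m) (ks n) < e"
    proof (intro exI allI impI)
      fix m n assume mn: "m \<ge> N" "n \<ge> N"
      have "2 / real (Suc n) \<le> 2 / Suc N" "2 / real (Suc m) \<le> 2 / Suc N"
        using mn by (simp_all add: frac_le)
      then have "(dist (ks m) (ks n))\<^sup>2 < e\<^sup>2" using cd[of m n] Npos by (simp add: dist_norm)
      then show "dist (ks m) (ks n) < e" using e by (simp add: power_less_imp_less_base)
    qed
  qed
  then obtain k0 where k0: "ks \<longlonglongrightarrow> k0" using convergent_eq_Cauchy by blast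
  have k0K: "k0 \<in> K" using cK k0 ksK closed_sequentially by blast
  have "norm (u - k0) \<le> d"
  proof (rule tendsto_le[OF _ _ _])
    show "((\<lambda>n. sqrt (d\<^sup>2 + 1 / (Suc n))) \<longlongrightarrow> d) sequentially"
    proof -
      have "((\<lambda>n. sqrt (d\<^sup>2 + 1 / real (Suc n))) \<longlongrightarrow> sqrt (d\<^sup>2 + 0)) sequentially"
        by (intro tendsto_intros LIMSEQ_inverse_real_of_nat[unfolded inverse_eq_divide])
      then show ?thesis using d0 by simp
    qed
    show "((\<lambda>n. norm (u - ks n)) \<longlongrightarrow> norm (u - k0)) sequentially"
      by (intro tendsto_intros k0)
    show "\<forall>\<^sub>F n in sequentially. norm (u - ks n) \<le> sqrt (d\<^sup>2 + 1 / real (Suc n))"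
      by (intro always_eventually allI less_imp_le ksd)
  qed simp
  then have minim: "norm (u - k0) \<le> norm (u - k)" if "k \<in> K" for k using dle[OF that] by simp
  define w where "w = u - k0"
  have w0: "w \<noteq> 0" using uK k0K w_def by auto
  have "cinner k w = 0" if kK: "k \<in> K" for k
  proof -
    define c where "c = cinner w k"
    have cw: "cinner k w = cnj c" unfolding c_def by (rule cinner_conj_sym)
    have ccn: "c * cnj c = complex_of_real ((cmod c)\<^sup>2)" by (metis complex_norm_square of_real_power)
    have "0 \<le> 0 - 2 * t * (cmod c)\<^sup>2 + t\<^sup>2 * (cmod c)\<^sup>2 * (norm k)\<^sup>2" for t
    proof -
      define s where "s = complex_of_real t * c"
      have 1: "cnj s * c = complex_of_real (t * (cmod c)\<^sup>2)"
        unfolding s_def using ccn by (simp add: mult.commute mult.left_commute)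
      have 2: "s * cnj c = complex_of_real (t * (cmod c)\<^sup>2)"
        unfolding s_def using ccn by (simp add: mult.assoc)
      have 3: "s * cnj s = complex_of_real (t\<^sup>2 * (cmod c)\<^sup>2)"
        unfolding s_def using ccn by (simp add: power2_eq_square mult.commute mult.left_commute)
      have "k0 + s *\<^sub>C k \<in> K" using aK[OF k0K sK[OF kK]] .
      moreover have "u - (k0 + s *\<^sub>C k) = w - s *\<^sub>C k" by (simp add: w_def diff_diff_eq)
      ultimately have "norm w \<le> norm (w - s *\<^sub>C k)" using minim w_def by metis
      then have "(norm w)\<^sup>2 \<le> (norm (w - s *\<^sub>C k))\<^sup>2" by (intro power_mono) auto
      also have "\<dots> = Re (cinner (w - s *\<^sub>C k) (w - s *\<^sub>C k))" by (simp add: Re_cinner_self)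
      also have "\<dots> = (norm w)\<^sup>2 - 2 * t * (cmod c)\<^sup>2 + t\<^sup>2 * (cmod c)\<^sup>2 * (norm k)\<^sup>2"
        unfolding cinner_expand c_def[symmetric] cw 1 2 3 by (simp add: Re_cinner_self)
      finally show ?thesis by simp
    qed
    then have "(cmod c)\<^sup>2 \<le> 0 * (norm k)\<^sup>2" by (rule quad_nonneg_imp) auto
    then have "c = 0" by simp
    then show ?thesis using cw by simp
  qed
  then show ?thesis using w0 by blast
qed



lemma riesz:
  fixes f :: "'a::chilbert_space \<Rightarrow> complex"
  assumes fa: "\<And>x y. f (x + y) = f x + f y" and fs: "\<And>c x. f (c *\<^sub>C x) = c * f x"
    and fb: "\<And>x. norm (f x) \<le> norm x * K"
  shows "\<exists>z. \<forall>x. f x = cinner x z"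
proof (cases "\<forall>x. f x = 0")
  case True then show ?thesis by (intro exI[of _ 0]) simp
next
  case False
  then obtain u where u: "f u \<noteq> 0" by blast
  have bl: "bounded_linear f"
  proof (rule bounded_linear_intro[where K=K])
    show "f (r *\<^sub>R x) = r *\<^sub>R f x" for r x
      using fs[of "of_real r" x] by (simp add: scaleC_of_real scaleR_conv_of_real)
  qed (use fa fb in auto)
  define K0 where "K0 = {x. f x = 0}"
  have cK: "closed K0" unfolding K0_def
    by (rule closed_Collect_eq) (auto intro: linear_continuous_on bl)
  have f0: "f 0 = 0" using fa[of 0 0] by simp
  obtain w where w0: "w \<noteq> 0" and wo: "\<forall>k\<in>K0. cinner k w = 0"
    using proj_orth[OF cK, of u] u f0 fa fs unfolding K0_def by auto
  have fw: "f w \<noteq> 0"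
  proof
    assume "f w = 0"
    then have "cinner w w = 0" using wo unfolding K0_def by auto
    then show False using w0 by (simp add: cinner_eq_zero_iff)
  qed
  have ww: "cinner w w \<noteq> 0" using w0 by (simp add: cinner_eq_zero_iff)
  define z where "z = cnj (f w / cinner w w) *\<^sub>C w"
  have "f x = cinner x z" for x
  proof -
    have "f (f x *\<^sub>C w - f w *\<^sub>C x) = 0"
    proof -
      have "f (f x *\<^sub>C w + (- f w) *\<^sub>C x) = 0" by (simp add: fa fs)
      moreover have "f x *\<^sub>C w - f w *\<^sub>C x = f x *\<^sub>C w + (- f w) *\<^sub>C x"
        by (simp add: scaleC_minus_left)
      ultimately show ?thesis by metis
    qed
    then have "cinner (f x *\<^sub>C w - f w *\<^sub>C x) w = 0" using wo unfolding K0_def by auto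
    then have "f x * cinner w w = f w * cinner x w"
      by (simp add: cinner_diff_left cinner_scaleC_left)
    then show ?thesis unfolding z_def using ww
      by (simp add: cinner_scaleC_right field_simps)
  qed
  then show ?thesis by blast
qed

lemma adj_exists:
  fixes T :: "'a::chilbert_space \<Rightarrow> 'a"
  assumes bT: "bounded_clinear T"
  shows "\<exists>S. \<forall>x y. cinner (T x) y = cinner x (S y)"
proof -
  obtain K where K: "\<And>x. norm (T x) \<le> norm x * K" using bcl_bound[OF bT] by blast
  have "\<exists>z. \<forall>x. cinner (T x) y = cinner x z" for y
  proof (rule riesz)
    show "cinner (T (x + x')) y = cinner (T x) y + cinner (T x') y" for x x'
      by (simp add: bcl_add[OF bT] cinner_add_left)
    show "cinner (T (c *\<^sub>C x)) y = c * cinner (T x) y" for c x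
      by (simp add: bcl_scaleC[OF bT] cinner_scaleC_left)
    show "norm (cinner (T x) y) \<le> norm x * (K * norm y)" for x
    proof -
      have "norm (cinner (T x) y) \<le> norm (T x) * norm y" by (simp add: cauchy_schwarz)
      also have "\<dots> \<le> norm x * K * norm y" by (rule mult_right_mono[OF K]) simp
      finally show ?thesis by (simp add: mult.assoc)
    qed
  qed
  then show ?thesis by metis
qed

lemma adj_prop:
  fixes T :: "'a::chilbert_space \<Rightarrow> 'a"
  assumes "bounded_clinear T"
  shows "cinner (T x) y = cinner x (adj T y)"
proof -
  have "\<forall>x y. cinner (T x) y = cinner x (adj T y)"
    unfolding adj_def by (rule someI_ex[OF adj_exists[OF assms]])
  then show ?thesis by blast
qed

lemma adj_prop2:
  fixes T :: "'a::chilbert_space \<Rightarrow> 'a"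
  assumes "bounded_clinear T"
  shows "cinner (adj T x) y = cinner x (T y)"
  by (metis adj_prop assms cinner_conj_sym)

lemma adj_bcl:
  fixes T :: "'a::chilbert_space \<Rightarrow> 'a"
  assumes bT: "bounded_clinear T"
  shows "bounded_clinear (adj T)"
proof -
  obtain K where K: "\<And>x. norm (T x) \<le> norm x * K" "K > 0" using bcl_pos_bound[OF bT] by blast
  have add: "adj T (x + y) = adj T x + adj T y" for x y
    by (rule cinner_ext) (simp add: adj_prop[OF bT, symmetric] cinner_add_right)
  have sc: "adj T (c *\<^sub>C x) = c *\<^sub>C adj T x" for c x
    by (rule cinner_ext) (simp add: adj_prop[OF bT, symmetric] cinner_scaleC_right)
  have bd: "norm (adj T y) \<le> norm y * K" for y
  proof -
    have "(norm (adj T y))\<^sup>2 = Re (cinner (adj T y) (adj T y))" by (simp add: Re_cinner_self)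
    also have "\<dots> = Re (cinner (T (adj T y)) y)" by (simp add: adj_prop[OF bT])
    also have "\<dots> \<le> norm (T (adj T y)) * norm y" by (rule Re_cinner_le)
    also have "\<dots> \<le> norm (adj T y) * K * norm y" by (rule mult_right_mono[OF K(1)]) simp
    finally have "norm (adj T y) * norm (adj T y) \<le> norm (adj T y) * (norm y * K)"
      by (simp add: power2_eq_square mult_ac)
    then show ?thesis
      using K(2) by (cases "norm (adj T y) = 0") (auto simp: mult_le_cancel_left)
  qed
  show ?thesis unfolding bounded_clinear_def using add sc bd by blast
qed

lemma adj_adj:
  fixes T :: "'a::chilbert_space \<Rightarrow> 'a"
  assumes bT: "bounded_clinear T"
  shows "adj (adj T) = T"
proof -
  have ex: "\<exists>S. \<forall>x y. cinner (adj T x) y = cinner x (S y)"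
    by (intro exI[of _ T]) (simp add: adj_prop2[OF bT])
  have "\<forall>x y. cinner (adj T x) y = cinner x (adj (adj T) y)"
    unfolding adj_def[of "adj T"] by (rule someI_ex[OF ex])
  then have "cinner x (adj (adj T) y) = cinner x (T y)" for x y
    by (simp add: adj_prop2[OF bT])
  then show ?thesis by (intro ext cinner_ext) simp
qed

lemma adjT_T_positive:
  fixes T :: "'a::chilbert_space \<Rightarrow> 'a"
  assumes bT: "bounded_clinear T"
  shows "positive_op (adj T \<circ> T)"
proof -
  have "cinner (adj T (T x)) x = cinner (T x) (T x)" for x by (simp add: adj_prop2[OF bT])
  then show ?thesis unfolding positive_op_def
    using bcl_comp[OF adj_bcl[OF bT] bT] by (simp add: o_def cinner_self_eq)
qed



lemma sq_cancel_aux: "(s::real) * s \<le> b * s \<Longrightarrow> 0 \<le> s \<Longrightarrow> 0 \<le> b \<Longrightarrow> s \<le> b"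
  by (cases "s = 0") (auto simp: mult_le_cancel_right)

lemma form_bound_norm:
  assumes bX: "bounded_clinear X" and sX: "selfadj X" and pX: "posf X" and c: "0 \<le> c"
    and fb: "\<And>z. Re (cinner (X z) z) \<le> c * (norm z)\<^sup>2"
  shows "norm (X x) \<le> c * norm x"
proof -
  have "(cmod (cinner (X x) (X x)))\<^sup>2 \<le> Re (cinner (X x) x) * Re (cinner (X (X x)) (X x))"
    by (rule gen_cs[OF bX sX pX])
  also have "\<dots> \<le> (c * (norm x)\<^sup>2) * (c * (norm (X x))\<^sup>2)"
    using pX c unfolding posf_def by (intro mult_mono fb) auto
  also have "\<dots> = (c * norm x)\<^sup>2 * (norm (X x))\<^sup>2" by (simp add: power2_eq_square mult_ac)
  finally have "(norm (X x))\<^sup>2 * (norm (X x))\<^sup>2 \<le> (c * norm x)\<^sup>2 * (norm (X x))\<^sup>2"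
    by (simp only: cmod_cinner_self power2_eq_square[of "(norm (X x))\<^sup>2"])
  then have "(norm (X x))\<^sup>2 \<le> (c * norm x)\<^sup>2" by (rule sq_cancel_aux) simp_all
  moreover have "0 \<le> c * norm x" using c by simp
  ultimately show ?thesis by (rule power2_le_imp_le)
qed

lemma sa_pos_zero:
  assumes bX: "bounded_clinear X" and sX: "selfadj X" and pX: "posf X"
    and z: "Re (cinner (X y) y) = 0"
  shows "X y = 0"
proof -
  have "(cmod (cinner (X y) (X y)))\<^sup>2 \<le> Re (cinner (X y) y) * Re (cinner (X (X y)) (X y))"
    by (rule gen_cs[OF bX sX pX])
  also have "\<dots> = 0" using z by simp
  finally have "(norm (X y))\<^sup>2 * (norm (X y))\<^sup>2 \<le> 0"
    by (simp only: cmod_cinner_self power2_eq_square[of "(norm (X y))\<^sup>2"])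
  then have "(norm (X y))\<^sup>2 = 0" by (metis mult_le_0_iff zero_le_power2 order_antisym not_le
        mult_pos_pos less_le)
  then show ?thesis by simp
qed

lemma tendsto_scaleC_right:
  assumes "(f \<longlongrightarrow> a) F" shows "((\<lambda>n. c *\<^sub>C f n) \<longlongrightarrow> c *\<^sub>C (a::'a::complex_inner)) F"
proof -
  have "bounded_linear (\<lambda>v::'a. c *\<^sub>C v)"
  proof (rule bounded_linear_intro[where K="cmod c"])
    show "c *\<^sub>C (x + y) = c *\<^sub>C x + c *\<^sub>C y" for x y :: 'a by (rule scaleC_add_right)
    show "c *\<^sub>C (r *\<^sub>R x) = r *\<^sub>R (c *\<^sub>C x)" for r and x :: 'a
      by (simp add: scaleR_scaleC scaleC_scaleC mult.commute)
    show "norm (c *\<^sub>C x) \<le> norm x * cmod c" for x :: 'a by (simp add: norm_scaleC mult.commute)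
  qed
  then show ?thesis using assms by (rule bounded_linear.tendsto)
qed

primrec Yit :: "('a::chilbert_space \<Rightarrow> 'a) \<Rightarrow> nat \<Rightarrow> 'a \<Rightarrow> 'a" where
  "Yit Q 0 = (\<lambda>x. 0)"
| "Yit Q (Suc n) = (\<lambda>x. (1/2) *\<^sub>R (Q x + Yit Q n (Yit Q n x)))"

inductive nnp :: "('a::chilbert_space \<Rightarrow> 'a) \<Rightarrow> ('a \<Rightarrow> 'a) \<Rightarrow> bool" for Q where
  nnp_pow: "nnp Q (Q ^^ k)"
| nnp_add: "nnp Q X \<Longrightarrow> nnp Q Z \<Longrightarrow> nnp Q (\<lambda>x. X x + Z x)"
| nnp_scale: "0 \<le> c \<Longrightarrow> nnp Q X \<Longrightarrow> nnp Q (\<lambda>x. c *\<^sub>R X x)"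

definition Ylim :: "('a::chilbert_space \<Rightarrow> 'a) \<Rightarrow> 'a \<Rightarrow> 'a"
  where "Ylim Q x = lim (\<lambda>n. Yit Q n x)"

locale qop =
  fixes Q :: "'a::chilbert_space \<Rightarrow> 'a"
  assumes bQ: "bounded_clinear Q" and sQ: "selfadj Q" and pQ: "posf Q"
    and nQ: "\<And>x. norm (Q x) \<le> norm x"
begin

lemma pow_bcl: "bounded_clinear (Q ^^ k)"
proof (induction k)
  case 0 then show ?case using bcl_id by (simp add: id_def)
next
  case (Suc k) then show ?case using bcl_comp[OF bQ Suc] by (simp add: o_def)
qed

lemma pow_swap: "Q ((Q ^^ k) x) = (Q ^^ k) (Q x)"
  by (rule funpow_swap1)

lemma pow_sa: "selfadj (Q ^^ k)"
proof (induction k)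
  case 0 then show ?case by (simp add: selfadj_def)
next
  case (Suc k)
  show ?case unfolding selfadj_def
  proof (intro allI)
    fix x y
    have "cinner ((Q ^^ Suc k) x) y = cinner (Q ((Q ^^ k) x)) y" by (simp only: funpow.simps(2) o_apply)
    also have "\<dots> = cinner ((Q ^^ k) x) (Q y)" by (rule sQ[unfolded selfadj_def, rule_format])
    also have "\<dots> = cinner x ((Q ^^ k) (Q y))" by (rule Suc[unfolded selfadj_def, rule_format])
    also have "\<dots> = cinner x ((Q ^^ Suc k) y)" by (simp only: funpow_Suc_right o_apply)
    finally show "cinner ((Q ^^ Suc k) x) y = cinner x ((Q ^^ Suc k) y)" .
  qed
qed

lemma pow_pos: "posf (Q ^^ k)"
  unfolding posf_def
proof
  fix x
  define j where "j = k div 2"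
  have "k = j + j \<or> k = Suc (j + j)" unfolding j_def by presburger
  then show "0 \<le> Re (cinner ((Q ^^ k) x) x)"
  proof
    assume k: "k = j + j"
    have "cinner ((Q ^^ k) x) x = cinner ((Q ^^ j) ((Q ^^ j) x)) x" by (simp add: k funpow_add)
    also have "\<dots> = cinner ((Q ^^ j) x) ((Q ^^ j) x)" using pow_sa[of j] by (simp add: selfadj_def)
    finally show ?thesis by (simp add: cinner_nonneg)
  next
    assume k: "k = Suc (j + j)"
    have "cinner ((Q ^^ k) x) x = cinner ((Q ^^ j) (Q ((Q ^^ j) x))) x"
      by (simp add: k funpow_add pow_swap)
    also have "\<dots> = cinner (Q ((Q ^^ j) x)) ((Q ^^ j) x)" using pow_sa[of j] by (simp add: selfadj_def)
    finally show ?thesis using pQ by (simp add: posf_def)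
  qed
qed

lemma nnp_bcl: "nnp Q X \<Longrightarrow> bounded_clinear X"
  by (induction rule: nnp.induct) (auto intro: pow_bcl bcl_add_op bcl_scaleR_op)

lemma nnp_sa: "nnp Q X \<Longrightarrow> selfadj X"
proof (induction rule: nnp.induct)
  case (nnp_pow k) then show ?case by (rule pow_sa)
qed (auto simp: selfadj_def cinner_add_left cinner_add_right cinner_scaleR_left cinner_scaleR_right)

lemma nnp_pos: "nnp Q X \<Longrightarrow> posf X"
proof (induction rule: nnp.induct)
  case (nnp_pow k) then show ?case by (rule pow_pos)
qed (auto simp: posf_def cinner_add_left cinner_scaleR_left)

lemma nnp_zero: "nnp Q (\<lambda>x. 0)"
  using nnp_scale[OF order_refl nnp_pow[of Q 0]] by simp

lemma nnp_comm_pow: "nnp Q Z \<Longrightarrow> (Q ^^ j) (Z x) = Z ((Q ^^ j) x)"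
proof (induction arbitrary: x rule: nnp.induct)
  case (nnp_pow k)
  have "(Q ^^ j) ((Q ^^ k) x) = (Q ^^ (j + k)) x" by (simp add: funpow_add)
  also have "\<dots> = (Q ^^ (k + j)) x" by (simp only: add.commute)
  also have "\<dots> = (Q ^^ k) ((Q ^^ j) x)" by (simp add: funpow_add)
  finally show ?case .
next
  case (nnp_add X Z) then show ?case by (simp add: bcl_add[OF pow_bcl])
next
  case (nnp_scale c X) then show ?case by (simp add: bcl_scaleR[OF pow_bcl])
qed

lemma nnp_comm: "nnp Q X \<Longrightarrow> nnp Q Z \<Longrightarrow> X (Z x) = Z (X x)"
proof (induction arbitrary: x rule: nnp.induct)
  case (nnp_pow k) then show ?case by (intro nnp_comm_pow)
next
  case (nnp_add X1 X2)
  have bZ: "bounded_clinear Z" using nnp_add.prems by (rule nnp_bcl)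
  have "X1 (Z x) = Z (X1 x)" "X2 (Z x) = Z (X2 x)" using nnp_add.IH nnp_add.prems by blast+
  then show ?case by (simp only: bcl_add[OF bZ])
next
  case (nnp_scale c X)
  have bZ: "bounded_clinear Z" using nnp_scale.prems by (rule nnp_bcl)
  have "X (Z x) = Z (X x)" using nnp_scale.IH nnp_scale.prems by blast
  then show ?case by (simp only: bcl_scaleR[OF bZ])
qed

lemma nnp_comp_pow: "nnp Q Z \<Longrightarrow> nnp Q (\<lambda>x. (Q ^^ j) (Z x))"
proof (induction rule: nnp.induct)
  case (nnp_pow k)
  have "(\<lambda>x. (Q ^^ j) ((Q ^^ k) x)) = Q ^^ (j + k)" by (simp add: funpow_add o_def)
  then show ?case by (simp only: nnp.nnp_pow)
next
  case (nnp_add X Z)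
  have eq: "(\<lambda>x. (Q ^^ j) (X x + Z x)) = (\<lambda>x. (Q ^^ j) (X x) + (Q ^^ j) (Z x))"
    by (simp only: bcl_add[OF pow_bcl])
  show ?case unfolding eq by (rule nnp.nnp_add) (fact nnp_add.IH)+
next
  case (nnp_scale c X)
  have eq: "(\<lambda>x. (Q ^^ j) (c *\<^sub>R X x)) = (\<lambda>x. c *\<^sub>R (Q ^^ j) (X x))"
    by (simp only: bcl_scaleR[OF pow_bcl])
  show ?case unfolding eq by (rule nnp.nnp_scale) (fact nnp_scale.hyps, fact nnp_scale.IH)
qed

lemma nnp_comp: "nnp Q X \<Longrightarrow> nnp Q Z \<Longrightarrow> nnp Q (\<lambda>x. X (Z x))"
proof (induction rule: nnp.induct)
  case (nnp_pow k) then show ?case by (rule nnp_comp_pow)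
next
  case (nnp_add X1 X2)
  show ?case by (rule nnp.nnp_add) (use nnp_add in blast)+
next
  case (nnp_scale c X)
  show ?case by (rule nnp.nnp_scale) (use nnp_scale in blast)+
qed

lemma Q_nnp: "nnp Q Q"
  using nnp_pow[of Q 1] by simp

lemma Y_nnp: "nnp Q (Yit Q n)"
proof (induction n)
  case 0 then show ?case by (simp add: nnp_zero)
next
  case (Suc n)
  have "nnp Q (\<lambda>x. Q x + Yit Q n (Yit Q n x))" by (rule nnp_add[OF Q_nnp nnp_comp[OF Suc Suc]])
  then have "nnp Q (\<lambda>x. (1/2) *\<^sub>R (Q x + Yit Q n (Yit Q n x)))" by (rule nnp_scale[rotated]) simp
  then show ?case by (simp only: Yit.simps(2))
qed

lemma Y_bcl: "bounded_clinear (Yit Q n)" by (rule nnp_bcl[OF Y_nnp])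

lemma D_nnp: "nnp Q (\<lambda>x. Yit Q (Suc n) x - Yit Q n x)"
proof (induction n)
  case 0
  have "(\<lambda>x. Yit Q (Suc 0) x - Yit Q 0 x) = Yit Q (Suc 0)" by (rule ext) (simp only: Yit.simps(1) diff_zero)
  then show ?case using Y_nnp[of "Suc 0"] by (simp only:)
next
  case (Suc n)
  define Y1 where "Y1 = Yit Q (Suc n)"
  define Y0 where "Y0 = Yit Q n"
  have b1: "bounded_clinear Y1" and b0: "bounded_clinear Y0" unfolding Y1_def Y0_def by (rule Y_bcl)+
  have c: "Y1 (Y0 x) = Y0 (Y1 x)" for x unfolding Y1_def Y0_def by (rule nnp_comm[OF Y_nnp Y_nnp])
  have eq: "(\<lambda>x. Yit Q (Suc (Suc n)) x - Yit Q (Suc n) x) =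
      (\<lambda>x. (1/2) *\<^sub>R ((\<lambda>x. Y1 x - Y0 x) (Y1 x + Y0 x)))"
  proof
    fix x
    have "Yit Q (Suc (Suc n)) x - Yit Q (Suc n) x = (1/2) *\<^sub>R (Y1 (Y1 x) - Y0 (Y0 x))"
      unfolding Y1_def Y0_def by (simp add: scaleR_diff_right[symmetric])
    also have "Y1 (Y1 x) - Y0 (Y0 x) = (Y1 (Y1 x) + Y1 (Y0 x)) - (Y0 (Y1 x) + Y0 (Y0 x))"
      using c by simp
    also have "\<dots> = Y1 (Y1 x + Y0 x) - Y0 (Y1 x + Y0 x)" by (simp add: bcl_add[OF b1] bcl_add[OF b0])
    finally show "Yit Q (Suc (Suc n)) x - Yit Q (Suc n) x = (1/2) *\<^sub>R ((\<lambda>x. Y1 x - Y0 x) (Y1 x + Y0 x))"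
      by simp
  qed
  have h1: "nnp Q (\<lambda>x. Y1 x - Y0 x)" using Suc by (simp only: Y1_def Y0_def)
  have h2: "nnp Q (\<lambda>x. Y1 x + Y0 x)" unfolding Y1_def Y0_def by (rule nnp_add[OF Y_nnp Y_nnp])
  have "nnp Q (\<lambda>x. (\<lambda>x. Y1 x - Y0 x) ((\<lambda>x. Y1 x + Y0 x) x))" by (rule nnp_comp[OF h1 h2])
  then have "nnp Q (\<lambda>x. (1/2) *\<^sub>R ((\<lambda>x. Y1 x - Y0 x) (Y1 x + Y0 x)))"
    by (intro nnp_scale) simp_all
  then show ?case unfolding eq .
qed

lemma Ydiff_nnp: "n \<le> m \<Longrightarrow> nnp Q (\<lambda>x. Yit Q m x - Yit Q n x)"
proof (induction m rule: dec_induct)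
  case base then show ?case using nnp_zero by simp
next
  case (step m)
  have "nnp Q (\<lambda>x. (Yit Q (Suc m) x - Yit Q m x) + (Yit Q m x - Yit Q n x))"
    by (rule nnp_add[OF D_nnp step.IH])
  then show ?case by simp
qed

lemma Y_norm: "norm (Yit Q n x) \<le> norm x"
proof (induction n arbitrary: x)
  case 0 then show ?case by simp
next
  case (Suc n)
  have "norm (Q x + Yit Q n (Yit Q n x)) \<le> norm (Q x) + norm (Yit Q n (Yit Q n x))"
    by (rule norm_triangle_ineq)
  also have "\<dots> \<le> norm x + norm x" using nQ[of x] Suc[of "Yit Q n x"] Suc[of x] by linarith
  finally show ?case by simp
qed

end



context qop begin

lemma Ydiff_bcl: "bounded_clinear (\<lambda>x. Yit Q m x - Yit Q n x)"
  by (rule bcl_diff_op[OF Y_bcl Y_bcl])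

lemma r_mono: "n \<le> m \<Longrightarrow> Re (cinner (Yit Q n x) x) \<le> Re (cinner (Yit Q m x) x)"
proof -
  assume "n \<le> m"
  then have "posf (\<lambda>x. Yit Q m x - Yit Q n x)" by (rule nnp_pos[OF Ydiff_nnp])
  then have "0 \<le> Re (cinner (Yit Q m x - Yit Q n x) x)" unfolding posf_def by blast
  then show ?thesis by (simp add: cinner_diff_left)
qed

lemma r_bound: "Re (cinner (Yit Q n x) x) \<le> (norm x)\<^sup>2"
proof -
  have "Re (cinner (Yit Q n x) x) \<le> norm (Yit Q n x) * norm x" by (rule Re_cinner_le)
  also have "\<dots> \<le> norm x * norm x" by (rule mult_right_mono[OF Y_norm]) simp
  finally show ?thesis by (simp add: power2_eq_square)
qed

lemma Ydiff_norm:
  assumes "n \<le> m"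
  shows "(norm (Yit Q m x - Yit Q n x))\<^sup>2 \<le> 2 * (Re (cinner (Yit Q m x) x) - Re (cinner (Yit Q n x) x))"
proof -
  have N: "nnp Q (\<lambda>x. Yit Q m x - Yit Q n x)" using assms by (rule Ydiff_nnp)
  have nb: "norm (Yit Q m z - Yit Q n z) \<le> 2 * norm z" for z
  proof -
    have "norm (Yit Q m z - Yit Q n z) \<le> norm (Yit Q m z) + norm (Yit Q n z)" by (rule norm_triangle_ineq4)
    also have "\<dots> \<le> norm z + norm z" using Y_norm[of m z] Y_norm[of n z] by linarith
    finally show ?thesis by simp
  qed
  have "(norm (Yit Q m x - Yit Q n x))\<^sup>2 \<le> 2 * Re (cinner (Yit Q m x - Yit Q n x) x)"
    by (rule posf_norm_sq[OF nnp_bcl[OF N] nnp_sa[OF N] nnp_pos[OF N], of 2, OF nb])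
  then show ?thesis by (simp add: cinner_diff_left)
qed

lemma Y_Cauchy: "Cauchy (\<lambda>n. Yit Q n x)"
proof -
  define r where "r n = Re (cinner (Yit Q n x) x)" for n
  have inc: "incseq r" unfolding r_def by (intro incseq_SucI r_mono) simp
  have bdd: "bdd_above (range r)" unfolding r_def by (intro bdd_aboveI[of _ "(norm x)\<^sup>2"]) (auto simp: r_bound)
  have "convergent r" using LIMSEQ_incseq_SUP[OF bdd inc] by (rule convergentI)
  then have cr: "Cauchy r" by (rule convergent_Cauchy)
  show ?thesis
  proof (rule metric_CauchyI)
    fix e :: real assume e: "e > 0"
    then have "e\<^sup>2 / 2 > 0" by simp
    then obtain M where M: "\<And>m n. m \<ge> M \<Longrightarrow> n \<ge> M \<Longrightarrow> dist (r m) (r n) < e\<^sup>2 / 2"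
      using cr unfolding Cauchy_def by blast
    have key: "dist (Yit Q m x) (Yit Q n x) < e" if "m \<ge> M" "n \<ge> M" "n \<le> m" for m n
    proof -
      have "(dist (Yit Q m x) (Yit Q n x))\<^sup>2 \<le> 2 * (r m - r n)"
        unfolding dist_norm r_def by (rule Ydiff_norm[OF that(3)])
      also have "\<dots> < e\<^sup>2"
      proof -
        have "\<bar>r m - r n\<bar> < e\<^sup>2 / 2" using M[OF that(1,2)] by (simp add: dist_real_def)
        moreover have "r m - r n \<le> \<bar>r m - r n\<bar>" by simp
        ultimately show ?thesis by (smt (verit) field_sum_of_halves)
      qed
      finally show ?thesis using e by (simp add: power_less_imp_less_base)
    qed
    show "\<exists>M. \<forall>m\<ge>M. \<forall>n\<ge>M. dist (Yit Q m x) (Yit Q n x) < e"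
    proof (intro exI allI impI)
      fix m n assume "m \<ge> M" "n \<ge> M"
      then show "dist (Yit Q m x) (Yit Q n x) < e"
        using key[of m n] key[of n m] by (cases "n \<le> m") (auto simp: dist_commute)
    qed
  qed
qed

lemma Y_lim: "(\<lambda>n. Yit Q n x) \<longlonglongrightarrow> Ylim Q x"
  unfolding Ylim_def using Y_Cauchy Cauchy_convergent convergent_LIMSEQ_iff by blast

lemma Ylim_add: "Ylim Q (x + y) = Ylim Q x + Ylim Q y"
proof -
  have "(\<lambda>n. Yit Q n (x + y)) \<longlonglongrightarrow> Ylim Q x + Ylim Q y"
    using tendsto_add[OF Y_lim[of x] Y_lim[of y]] by (simp add: bcl_add[OF Y_bcl])
  then show ?thesis using Y_lim LIMSEQ_unique by blast
qed

lemma Ylim_scaleC: "Ylim Q (c *\<^sub>C x) = c *\<^sub>C Ylim Q x"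
proof -
  have "(\<lambda>n. Yit Q n (c *\<^sub>C x)) \<longlonglongrightarrow> c *\<^sub>C Ylim Q x"
    using tendsto_scaleC_right[OF Y_lim[of x], of c] by (simp add: bcl_scaleC[OF Y_bcl])
  then show ?thesis using Y_lim LIMSEQ_unique by blast
qed

lemma Ylim_norm: "norm (Ylim Q x) \<le> norm x"
proof (rule LIMSEQ_le_const2)
  show "(\<lambda>n. norm (Yit Q n x)) \<longlonglongrightarrow> norm (Ylim Q x)" by (intro tendsto_intros Y_lim)
qed (use Y_norm in auto)

lemma Ylim_bcl: "bounded_clinear (Ylim Q)"
  unfolding bounded_clinear_def using Ylim_add Ylim_scaleC Ylim_norm
  by (metis mult.right_neutral)

lemma Ylim_sa: "selfadj (Ylim Q)"
  unfolding selfadj_def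
proof (intro allI)
  fix x y
  have 1: "(\<lambda>n. cinner (Yit Q n x) y) \<longlonglongrightarrow> cinner (Ylim Q x) y" by (intro tendsto_cinner_left Y_lim)
  have 2: "(\<lambda>n. cinner x (Yit Q n y)) \<longlonglongrightarrow> cinner x (Ylim Q y)" by (intro tendsto_cinner_right Y_lim)
  have "cinner (Yit Q n x) y = cinner x (Yit Q n y)" for n using nnp_sa[OF Y_nnp[of n]] by (simp add: selfadj_def)
  then show "cinner (Ylim Q x) y = cinner x (Ylim Q y)" using 1 2 LIMSEQ_unique by force
qed

lemma Ylim_pos: "posf (Ylim Q)"
  unfolding posf_def
proof
  fix x
  have "(\<lambda>n. Re (cinner (Yit Q n x) x)) \<longlonglongrightarrow> Re (cinner (Ylim Q x) x)"
    by (intro tendsto_Re tendsto_cinner_left Y_lim)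
  then show "0 \<le> Re (cinner (Ylim Q x) x)"
    by (rule LIMSEQ_le_const) (use nnp_pos[OF Y_nnp] in \<open>auto simp: posf_def\<close>)
qed

lemma Ylim_fix: "Ylim Q x = (1/2) *\<^sub>R (Q x + Ylim Q (Ylim Q x))"
proof -
  define L where "L = Ylim Q x"
  have a: "(\<lambda>n. Yit Q n (Yit Q n x)) \<longlonglongrightarrow> Ylim Q L"
  proof -
    have g: "(\<lambda>n. norm (Yit Q n x - L) + norm (Yit Q n L - Ylim Q L)) \<longlonglongrightarrow> 0 + 0"
    proof (intro tendsto_add)
      show "(\<lambda>n. norm (Yit Q n x - L)) \<longlonglongrightarrow> 0"
        using Y_lim[of x] unfolding L_def by (intro tendsto_norm_zero LIM_zero)
      show "(\<lambda>n. norm (Yit Q n L - Ylim Q L)) \<longlonglongrightarrow> 0"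
        using Y_lim[of L] by (intro tendsto_norm_zero LIM_zero)
    qed
    have "(\<lambda>n. Yit Q n (Yit Q n x) - Ylim Q L) \<longlonglongrightarrow> 0"
    proof (rule Lim_null_comparison[OF _ g[simplified]])
      show "\<forall>\<^sub>F n in sequentially. norm (Yit Q n (Yit Q n x) - Ylim Q L)
          \<le> norm (Yit Q n x - L) + norm (Yit Q n L - Ylim Q L)"
      proof (rule always_eventually, rule allI)
        fix n
        have "Yit Q n (Yit Q n x) - Ylim Q L = Yit Q n (Yit Q n x - L) + (Yit Q n L - Ylim Q L)"
          by (simp add: bcl_diff[OF Y_bcl])
        then have "norm (Yit Q n (Yit Q n x) - Ylim Q L) \<le> norm (Yit Q n (Yit Q n x - L)) + norm (Yit Q n L - Ylim Q L)"
          by (metis norm_triangle_ineq)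
        also have "\<dots> \<le> norm (Yit Q n x - L) + norm (Yit Q n L - Ylim Q L)"
          using Y_norm by (simp add: add_right_mono)
        finally show "norm (Yit Q n (Yit Q n x) - Ylim Q L) \<le> norm (Yit Q n x - L) + norm (Yit Q n L - Ylim Q L)" .
      qed
    qed
    then show ?thesis by (rule LIM_zero_cancel)
  qed
  have "(\<lambda>n. Yit Q (Suc n) x) \<longlonglongrightarrow> (1/2) *\<^sub>R (Q x + Ylim Q L)"
    using tendsto_scaleR[OF tendsto_const tendsto_add[OF tendsto_const a], of "1/2" "Q x"] by simp
  moreover have "(\<lambda>n. Yit Q (Suc n) x) \<longlonglongrightarrow> L" unfolding L_def using Y_lim LIMSEQ_Suc by blast
  ultimately show ?thesis unfolding L_def using LIMSEQ_unique by blast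
qed

end

lemma Y_intertwine:
  assumes q1: "qop Q1" and q2: "qop Q2" and bS: "bounded_clinear S" and c: "\<And>x. S (Q1 x) = Q2 (S x)"
  shows "S (Yit Q1 n x) = Yit Q2 n (S x)"
proof (induction n arbitrary: x)
  case 0 then show ?case by (simp add: bcl_zero[OF bS])
next
  case (Suc n)
  show ?case by (simp add: bcl_scaleR[OF bS] bcl_add[OF bS] c Suc)
qed

lemma Ylim_intertwine:
  assumes q1: "qop Q1" and q2: "qop Q2" and bS: "bounded_clinear S" and c: "\<And>x. S (Q1 x) = Q2 (S x)"
  shows "S (Ylim Q1 x) = Ylim Q2 (S x)"
proof -
  have "(\<lambda>n. S (Yit Q1 n x)) \<longlonglongrightarrow> S (Ylim Q1 x)"
    by (rule bounded_linear.tendsto[OF bcl_bounded_linear[OF bS] qop.Y_lim[OF q1]])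
  moreover have "(\<lambda>n. S (Yit Q1 n x)) \<longlonglongrightarrow> Ylim Q2 (S x)"
    using qop.Y_lim[OF q2, of "S x"] by (simp add: Y_intertwine[OF q1 q2 bS c])
  ultimately show ?thesis using LIMSEQ_unique by blast
qed



definition Qof :: "('a::chilbert_space \<Rightarrow> 'a) \<Rightarrow> real \<Rightarrow> 'a \<Rightarrow> 'a"
  where "Qof P M = (\<lambda>x. x - (1/M) *\<^sub>R P x)"

definition Rt :: "('a::chilbert_space \<Rightarrow> 'a) \<Rightarrow> real \<Rightarrow> 'a \<Rightarrow> 'a"
  where "Rt P M = (\<lambda>x. sqrt M *\<^sub>R (x - Ylim (Qof P M) x))"

definition pbound :: "('a::chilbert_space \<Rightarrow> 'a) \<Rightarrow> real \<Rightarrow> bool"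
  where "pbound P M \<longleftrightarrow> M > 0 \<and> (\<forall>x. Re (cinner (P x) x) \<le> M * (norm x)\<^sup>2)"

lemma positive_bcl: "positive_op P \<Longrightarrow> bounded_clinear P"
  by (simp add: positive_op_def)

lemma positive_posf: "positive_op P \<Longrightarrow> posf P"
  by (simp add: positive_op_def posf_def)

lemma Qof_qop:
  assumes pP: "positive_op P" and pb: "pbound P M"
  shows "qop (Qof P M)"
proof
  have bP: "bounded_clinear P" using pP by (rule positive_bcl)
  have sP: "selfadj P" using pP by (rule positive_selfadj)
  have M: "M > 0" and B: "\<And>x. Re (cinner (P x) x) \<le> M * (norm x)\<^sup>2" using pb by (auto simp: pbound_def)
  show bQ: "bounded_clinear (Qof P M)" unfolding Qof_def by (intro bcl_diff_op bcl_id bcl_scaleR_op bP)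
  show sQ: "selfadj (Qof P M)" using sP
    by (simp add: selfadj_def Qof_def cinner_diff_left cinner_diff_right cinner_scaleR_left cinner_scaleR_right)
  have e: "Re (cinner (Qof P M x) x) = (norm x)\<^sup>2 - (1/M) * Re (cinner (P x) x)" for x
    by (simp add: Qof_def cinner_diff_left cinner_scaleR_left Re_cinner_self)
  show pQ: "posf (Qof P M)" unfolding posf_def
  proof
    fix x
    have "Re (cinner (P x) x) / M \<le> (norm x)\<^sup>2" using B[of x] M by (simp add: pos_divide_le_eq mult.commute)
    then show "0 \<le> Re (cinner (Qof P M x) x)" unfolding e by simp
  qed
  show "norm (Qof P M x) \<le> norm x" for x
  proof -
    have "norm (Qof P M x) \<le> 1 * norm x"
    proof (rule form_bound_norm[OF bQ sQ pQ])
      show "Re (cinner (Qof P M z) z) \<le> 1 * (norm z)\<^sup>2" for z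
        unfolding e using M positive_posf[OF pP] by (simp add: posf_def)
    qed simp
    then show ?thesis by simp
  qed
qed

lemma Rt_bcl: "positive_op P \<Longrightarrow> pbound P M \<Longrightarrow> bounded_clinear (Rt P M)"
  unfolding Rt_def by (intro bcl_scaleR_op bcl_diff_op bcl_id qop.Ylim_bcl Qof_qop)

lemma Rt_positive:
  assumes pP: "positive_op P" and pb: "pbound P M"
  shows "positive_op (Rt P M)"
proof -
  interpret qop "Qof P M" by (rule Qof_qop[OF pP pb])
  have M: "M > 0" using pb by (simp add: pbound_def)
  have e: "cinner (Rt P M x) x = of_real (sqrt M) * (cinner x x - cinner (Ylim (Qof P M) x) x)" for x
    by (simp add: Rt_def cinner_scaleR_left cinner_diff_left)
  have "Im (cinner (Rt P M x) x) = 0" for x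
    unfolding e using selfadj_real[OF Ylim_sa] by simp
  moreover have "0 \<le> Re (cinner (Rt P M x) x)" for x
  proof -
    have "Re (cinner (Ylim (Qof P M) x) x) \<le> norm (Ylim (Qof P M) x) * norm x" by (rule Re_cinner_le)
    also have "\<dots> \<le> norm x * norm x" by (rule mult_right_mono[OF Ylim_norm]) simp
    finally have "Re (cinner (Ylim (Qof P M) x) x) \<le> (norm x)\<^sup>2" by (simp add: power2_eq_square)
    then show ?thesis unfolding e using M by (simp add: Re_cinner_self)
  qed
  ultimately show ?thesis unfolding positive_op_def using Rt_bcl[OF pP pb] by blast
qed

lemma Rt_square:
  assumes pP: "positive_op P" and pb: "pbound P M"
  shows "Rt P M (Rt P M x) = P x"
proof -
  interpret qop "Qof P M" by (rule Qof_qop[OF pP pb])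
  have M: "M > 0" using pb by (simp add: pbound_def)
  define Y where "Y = Ylim (Qof P M)"
  have bY: "bounded_clinear Y" unfolding Y_def by (rule Ylim_bcl)
  have fx: "Y (Y x) = 2 *\<^sub>R Y x - Qof P M x"
  proof -
    have "Y x = (1/2) *\<^sub>R (Qof P M x + Y (Y x))" unfolding Y_def by (rule Ylim_fix)
    then have "2 *\<^sub>R Y x = 2 *\<^sub>R ((1/2) *\<^sub>R (Qof P M x + Y (Y x)))" by (rule arg_cong)
    then have "2 *\<^sub>R Y x = Qof P M x + Y (Y x)" by (simp only: scaleR_scaleR) simp
    then show ?thesis by (simp add: algebra_simps)
  qed
  have "Rt P M (Rt P M x) = sqrt M *\<^sub>R (sqrt M *\<^sub>R (x - Y x) - Y (sqrt M *\<^sub>R (x - Y x)))"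
    by (simp add: Rt_def Y_def)
  also have "\<dots> = (sqrt M * sqrt M) *\<^sub>R (x - Y x - (Y x - Y (Y x)))"
    by (simp add: bcl_scaleR[OF bY] bcl_diff[OF bY] scaleR_diff_right)
  also have "\<dots> = M *\<^sub>R (x - Qof P M x)"
  proof -
    have "x - Y x - (Y x - (2 *\<^sub>R Y x - Qof P M x)) = x - Qof P M x" by (simp add: scaleR_2 algebra_simps)
    moreover have "sqrt M * sqrt M = M" using M by simp
    ultimately show ?thesis unfolding fx by simp
  qed
  also have "\<dots> = P x" using M by (simp add: Qof_def)
  finally show ?thesis .
qed

lemma Rt_intertwine:
  assumes p1: "positive_op P1" and b1: "pbound P1 M" and p2: "positive_op P2" and b2: "pbound P2 M"
    and bS: "bounded_clinear S" and c: "\<And>x. S (P1 x) = P2 (S x)"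
  shows "S (Rt P1 M x) = Rt P2 M (S x)"
proof -
  have cq: "S (Qof P1 M x) = Qof P2 M (S x)" for x
    by (simp add: Qof_def bcl_diff[OF bS] bcl_scaleR[OF bS] c)
  have "S (Ylim (Qof P1 M) x) = Ylim (Qof P2 M) (S x)"
    by (rule Ylim_intertwine[OF Qof_qop[OF p1 b1] Qof_qop[OF p2 b2] bS cq])
  then show ?thesis by (simp add: Rt_def bcl_diff[OF bS] bcl_scaleR[OF bS])
qed

lemma Rt_unique:
  assumes pP: "positive_op P" and pb: "pbound P M" and pR: "positive_op R" and sq: "\<And>x. R (R x) = P x"
  shows "R = Rt P M"
proof -
  define S0 where "S0 = Rt P M"
  have bR: "bounded_clinear R" using pR by (rule positive_bcl)
  have bS0: "bounded_clinear S0" unfolding S0_def by (rule Rt_bcl[OF pP pb])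
  have pS0: "positive_op S0" unfolding S0_def by (rule Rt_positive[OF pP pb])
  have sq0: "S0 (S0 x) = P x" for x unfolding S0_def by (rule Rt_square[OF pP pb])
  have cRP: "R (P x) = P (R x)" for x using sq by metis
  have com: "R (S0 x) = S0 (R x)" for x unfolding S0_def by (rule Rt_intertwine[OF pP pb pP pb bR cRP])
  define D where "D x = R x - S0 x" for x
  have bD: "bounded_clinear D" unfolding D_def by (rule bcl_diff_op[OF bR bS0])
  have sR: "selfadj R" and sS: "selfadj S0" using pR pS0 by (simp_all add: positive_selfadj)
  have sD: "selfadj D" using sR sS by (simp add: selfadj_def D_def cinner_diff_left cinner_diff_right)
  have DD: "D (D x) = 0" for x
  proof -
    define y where "y = D x"
    have "R y + S0 y = 0"
      unfolding y_def D_def by (simp add: bcl_diff[OF bR] bcl_diff[OF bS0] sq sq0 com)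
    then have "cinner (R y) y + cinner (S0 y) y = 0" by (metis cinner_add_left cinner_zero_left)
    then have "Re (cinner (R y) y) + Re (cinner (S0 y) y) = 0" by (metis plus_complex.sel(1) zero_complex.sel(1))
    moreover have "0 \<le> Re (cinner (R y) y)" "0 \<le> Re (cinner (S0 y) y)"
      using pR pS0 by (simp_all add: positive_op_def)
    ultimately have "Re (cinner (R y) y) = 0" "Re (cinner (S0 y) y) = 0" by linarith+
    then have "R y = 0" "S0 y = 0"
      using sa_pos_zero[OF bR sR positive_posf[OF pR]] sa_pos_zero[OF bS0 sS positive_posf[OF pS0]] by blast+
    then show ?thesis unfolding y_def by (simp add: D_def[of "D x"])
  qed
  have "D x = 0" for x
  proof -
    have "cinner (D x) (D x) = cinner (D (D x)) x" using sD by (simp add: selfadj_def)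
    then have "cinner (D x) (D x) = 0" by (simp add: DD)
    then show ?thesis by (simp add: cinner_eq_zero_iff)
  qed
  then show ?thesis unfolding S0_def[symmetric] using D_def by (intro ext) (metis eq_iff_diff_eq_0)
qed

lemma pbound_exists: "positive_op P \<Longrightarrow> \<exists>M. pbound P M"
proof -
  assume pP: "positive_op P"
  obtain K where K: "\<And>x. norm (P x) \<le> norm x * K" "K > 0" using bcl_pos_bound[OF positive_bcl[OF pP]] by blast
  have "Re (cinner (P x) x) \<le> K * (norm x)\<^sup>2" for x
  proof -
    have "Re (cinner (P x) x) \<le> norm (P x) * norm x" by (rule Re_cinner_le)
    also have "\<dots> \<le> norm x * K * norm x" by (rule mult_right_mono[OF K(1)]) simp
    finally show ?thesis by (simp add: power2_eq_square mult_ac)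
  qed
  then show ?thesis using K(2) unfolding pbound_def by blast
qed

lemma pbound_mono: "pbound P M \<Longrightarrow> M \<le> M' \<Longrightarrow> pbound P M'"
proof -
  assume a: "pbound P M" and m: "M \<le> M'"
  have "Re (cinner (P x) x) \<le> M' * (norm x)\<^sup>2" for x
  proof -
    have "Re (cinner (P x) x) \<le> M * (norm x)\<^sup>2" using a by (simp add: pbound_def)
    also have "\<dots> \<le> M' * (norm x)\<^sup>2" using m by (rule mult_right_mono) simp
    finally show ?thesis .
  qed
  then show ?thesis using a m by (simp add: pbound_def)
qed

lemma op_sqrt_eq:
  assumes pP: "positive_op P" and pb: "pbound P M"
  shows "op_sqrt P = Rt P M"
  unfolding op_sqrt_def
proof (rule the_equality)
  show "positive_op (Rt P M) \<and> Rt P M \<circ> Rt P M = P"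
    using Rt_positive[OF pP pb] Rt_square[OF pP pb] by (auto simp: o_def)
  show "R = Rt P M" if "positive_op R \<and> R \<circ> R = P" for R
    using that Rt_unique[OF pP pb] by (metis comp_apply)
qed

lemma op_sqrt_props:
  assumes pP: "positive_op P"
  shows "positive_op (op_sqrt P)" "\<And>x. op_sqrt P (op_sqrt P x) = P x"
proof -
  obtain M where pb: "pbound P M" using pbound_exists[OF pP] by blast
  show "positive_op (op_sqrt P)" using Rt_positive[OF pP pb] op_sqrt_eq[OF pP pb] by simp
  show "op_sqrt P (op_sqrt P x) = P x" for x using Rt_square[OF pP pb] op_sqrt_eq[OF pP pb] by simp
qed

lemma op_sqrt_intertwine:
  assumes p1: "positive_op P1" and p2: "positive_op P2"
    and bS: "bounded_clinear S" and c: "\<And>x. S (P1 x) = P2 (S x)"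
  shows "S (op_sqrt P1 x) = op_sqrt P2 (S x)"
proof -
  obtain M1 where m1: "pbound P1 M1" using pbound_exists[OF p1] by blast
  obtain M2 where m2: "pbound P2 M2" using pbound_exists[OF p2] by blast
  define M where "M = max M1 M2"
  have b1: "pbound P1 M" unfolding M_def by (rule pbound_mono[OF m1]) simp
  have b2: "pbound P2 M" unfolding M_def by (rule pbound_mono[OF m2]) simp
  show ?thesis using Rt_intertwine[OF p1 b1 p2 b2 bS c] op_sqrt_eq[OF p1 b1] op_sqrt_eq[OF p2 b2] by simp
qed



lemma shift_facts:
  fixes P :: "'a::chilbert_space \<Rightarrow> 'a"
  assumes pP: "positive_op P" and e: "\<epsilon> > 0"
  shows "bounded_clinear (\<lambda>x. P x + \<epsilon> *\<^sub>R x)" "selfadj (\<lambda>x. P x + \<epsilon> *\<^sub>R x)"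
    "posf (\<lambda>x. P x + \<epsilon> *\<^sub>R x)"
    "\<And>x. \<epsilon> * norm x \<le> norm (P x + \<epsilon> *\<^sub>R x)"
proof -
  have bP: "bounded_clinear P" by (rule positive_bcl[OF pP])
  have sP: "selfadj P" by (rule positive_selfadj[OF pP])
  show bL: "bounded_clinear (\<lambda>x. P x + \<epsilon> *\<^sub>R x)" by (intro bcl_add_op bP bcl_scaleR_op bcl_id)
  show "selfadj (\<lambda>x. P x + \<epsilon> *\<^sub>R x)" using sP
    by (simp add: selfadj_def cinner_add_left cinner_add_right cinner_scaleR_left cinner_scaleR_right)
  have e1: "Re (cinner (P x + \<epsilon> *\<^sub>R x) x) = Re (cinner (P x) x) + \<epsilon> * (norm x)\<^sup>2" for x
    by (simp add: cinner_add_left cinner_scaleR_left Re_cinner_self)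
  have ge: "\<epsilon> * (norm x)\<^sup>2 \<le> Re (cinner (P x + \<epsilon> *\<^sub>R x) x)" for x
    unfolding e1 using positive_posf[OF pP] by (simp add: posf_def)
  show "posf (\<lambda>x. P x + \<epsilon> *\<^sub>R x)" unfolding posf_def
  proof
    fix x :: 'a
    have "0 \<le> \<epsilon> * (norm x)\<^sup>2" using e by simp
    then show "0 \<le> Re (cinner (P x + \<epsilon> *\<^sub>R x) x)" using ge[of x] by linarith
  qed
  show "\<epsilon> * norm x \<le> norm (P x + \<epsilon> *\<^sub>R x)" for x
  proof -
    have "\<epsilon> * norm x * norm x \<le> norm (P x + \<epsilon> *\<^sub>R x) * norm x"
      using ge[of x] Re_cinner_le[of "P x + \<epsilon> *\<^sub>R x" x] by (simp add: power2_eq_square mult.assoc)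
    then show ?thesis by (cases "norm x = 0") (simp_all add: mult_le_cancel_right)
  qed
qed

lemma shift_inj:
  assumes pP: "positive_op P" and e: "\<epsilon> > 0" and eq: "P a + \<epsilon> *\<^sub>R a = P b + \<epsilon> *\<^sub>R b"
  shows "a = b"
proof -
  have bP: "bounded_clinear P" by (rule positive_bcl[OF pP])
  have "P (a - b) + \<epsilon> *\<^sub>R (a - b) = (P a + \<epsilon> *\<^sub>R a) - (P b + \<epsilon> *\<^sub>R b)"
    by (simp add: bcl_diff[OF bP] scaleR_diff_right)
  then have "P (a - b) + \<epsilon> *\<^sub>R (a - b) = 0" using eq by simp
  then have "\<epsilon> * norm (a - b) \<le> 0" using shift_facts(4)[OF pP e, of "a - b"] by simp
  then show ?thesis using e by (simp add: mult_le_0_iff)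
qed

lemma shift_surj:
  fixes P :: "'a::chilbert_space \<Rightarrow> 'a"
  assumes pP: "positive_op P" and e: "\<epsilon> > 0"
  shows "\<exists>w. P w + \<epsilon> *\<^sub>R w = y"
proof -
  define L where "L x = P x + \<epsilon> *\<^sub>R x" for x
  have bL: "bounded_clinear L" unfolding L_def by (rule shift_facts(1)[OF pP e])
  have lb: "\<epsilon> * norm x \<le> norm (L x)" for x unfolding L_def by (rule shift_facts(4)[OF pP e])
  have pL: "posf L" unfolding L_def by (rule shift_facts(3)[OF pP e])
  define V where "V = range L"
  have cV: "closed V" unfolding closed_sequential_limits
  proof (intro allI impI, elim conjE)
    fix s l assume sV: "\<forall>n. s n \<in> V" and sl: "s \<longlonglongrightarrow> l"
    have "\<forall>n. \<exists>x. s n = L x" using sV unfolding V_def by blast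
    then obtain xs where xs: "\<And>n. s n = L (xs n)" using choice[of "\<lambda>n x. s n = L x"] by blast
    have "Cauchy s" using sl by (rule LIMSEQ_imp_Cauchy)
    have "Cauchy xs"
    proof (rule metric_CauchyI)
      fix d :: real assume d: "d > 0"
      obtain M where M: "\<And>m n. m \<ge> M \<Longrightarrow> n \<ge> M \<Longrightarrow> dist (s m) (s n) < \<epsilon> * d"
        using \<open>Cauchy s\<close> d e unfolding Cauchy_def by (meson mult_pos_pos)
      show "\<exists>M. \<forall>m\<ge>M. \<forall>n\<ge>M. dist (xs m) (xs n) < d"
      proof (intro exI allI impI)
        fix m n assume "m \<ge> M" "n \<ge> M"
        then have "dist (s m) (s n) < \<epsilon> * d" by (rule M)
        moreover have "\<epsilon> * dist (xs m) (xs n) \<le> dist (s m) (s n)"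
          unfolding dist_norm xs using lb[of "xs m - xs n"] by (simp add: bcl_diff[OF bL])
        ultimately have "\<epsilon> * dist (xs m) (xs n) < \<epsilon> * d" by linarith
        then show "dist (xs m) (xs n) < d" using e by simp
      qed
    qed
    then obtain x where x: "xs \<longlonglongrightarrow> x" using convergent_eq_Cauchy by blast
    have "(\<lambda>n. L (xs n)) \<longlonglongrightarrow> L x"
      by (rule bounded_linear.tendsto[OF bcl_bounded_linear[OF bL] x])
    moreover have "s = (\<lambda>n. L (xs n))" using xs by auto
    ultimately have "s \<longlonglongrightarrow> L x" by simp
    then have "l = L x" using sl LIMSEQ_unique by blast
    then show "l \<in> V" unfolding V_def by simp
  qed
  show ?thesis
  proof (rule ccontr)
    assume "\<not> ?thesis"
    then have yV: "y \<notin> V" unfolding V_def L_def by auto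
    have z: "0 \<in> V" unfolding V_def using bcl_zero[OF bL] by (metis rangeI)
    have ad: "a + b \<in> V" if "a \<in> V" "b \<in> V" for a b
      using that unfolding V_def by (auto simp: bcl_add[OF bL, symmetric])
    have sc: "c *\<^sub>C a \<in> V" if "a \<in> V" for c a
      using that unfolding V_def by (auto simp: bcl_scaleC[OF bL, symmetric])
    obtain w where w0: "w \<noteq> 0" and wo: "\<forall>k\<in>V. cinner k w = 0"
      using proj_orth[OF cV z ad sc yV] by blast
    have "cinner (L w) w = 0" using wo unfolding V_def by simp
    then have "Re (cinner (L w) w) = 0" by simp
    moreover have sL: "selfadj L" unfolding L_def by (rule shift_facts(2)[OF pP e])
    ultimately have "L w = 0" using sa_pos_zero[OF bL _ pL] by blast
    then have "\<epsilon> * norm w \<le> 0" using lb[of w] by simp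
    then show False using w0 e by (simp add: mult_le_0_iff)
  qed
qed



lemma eps_lim:
  fixes a b c n :: real
  assumes h: "\<And>\<epsilon>. \<epsilon> > 0 \<Longrightarrow> c \<le> (a + \<epsilon> * n) * b" and n: "0 \<le> n" and b: "0 \<le> b"
  shows "c \<le> a * b"
proof (rule field_le_epsilon)
  fix e :: real assume e: "0 < e"
  define \<epsilon> where "\<epsilon> = e / (n * b + 1)"
  have nb: "0 \<le> n * b" using n b by simp
  have ep: "\<epsilon> > 0" unfolding \<epsilon>_def using e nb by simp
  have "\<epsilon> * n * b = e * ((n * b) / (n * b + 1))" unfolding \<epsilon>_def by (simp add: field_simps)
  also have "\<dots> \<le> e * 1" using nb e by (intro mult_left_mono) simp_all
  finally have "\<epsilon> * n * b \<le> e" by simp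
  moreover have "c \<le> a * b + \<epsilon> * n * b" using h[OF ep] by (simp add: algebra_simps)
  ultimately show "c \<le> a * b + e" by linarith
qed

lemma mixed_schwarz:
  fixes T A B :: "'a::chilbert_space \<Rightarrow> 'a"
  assumes bT: "bounded_clinear T" and pA: "positive_op A" and pB: "positive_op B"
    and TA: "\<And>x. T (A x) = B (T x)"
    and BB: "\<And>x. B (B x) = T (adj T x)"
  shows "(cmod (cinner (T x) y))\<^sup>2 \<le> Re (cinner (A x) x) * Re (cinner (B y) y)"
proof (rule eps_lim)
  show "0 \<le> (norm x)\<^sup>2" by simp
  show "0 \<le> Re (cinner (B y) y)" using pB by (simp add: positive_op_def)
  fix \<epsilon> :: real assume e: "\<epsilon> > 0"
  have bA: "bounded_clinear A" and bB: "bounded_clinear B" using pA pB by (simp_all add: positive_bcl)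
  have sA: "selfadj A" and sB: "selfadj B" using pA pB by (simp_all add: positive_selfadj)
  define Ae where "Ae v = A v + \<epsilon> *\<^sub>R v" for v
  have bAe: "bounded_clinear Ae" unfolding Ae_def by (rule shift_facts(1)[OF pA e])
  have sAe: "selfadj Ae" unfolding Ae_def by (rule shift_facts(2)[OF pA e])
  have pAe: "posf Ae" unfolding Ae_def by (rule shift_facts(3)[OF pA e])
  obtain w where w: "A w + \<epsilon> *\<^sub>R w = adj T y" using shift_surj[OF pA e] by blast
  have 1: "cinner (T x) y = cinner (Ae x) w"
  proof -
    have "cinner (T x) y = cinner x (adj T y)" by (rule adj_prop[OF bT])
    also have "\<dots> = cinner x (Ae w)" by (simp add: Ae_def w)
    also have "\<dots> = cinner (Ae x) w" using sAe by (simp add: selfadj_def)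
    finally show ?thesis .
  qed
  have 2: "(cmod (cinner (Ae x) w))\<^sup>2 \<le> Re (cinner (Ae x) x) * Re (cinner (Ae w) w)"
    by (rule gen_cs[OF bAe sAe pAe])
  have 3: "Re (cinner (Ae x) x) = Re (cinner (A x) x) + \<epsilon> * (norm x)\<^sup>2"
    by (simp add: Ae_def cinner_add_left cinner_scaleR_left Re_cinner_self)
  have 4: "cinner (Ae w) w = cinner y (T w)"
    using w adj_prop2[OF bT, of y w] by (simp add: Ae_def)
  have 5: "B (T w) + \<epsilon> *\<^sub>R T w = B (B y)"
  proof -
    have "B (T w) + \<epsilon> *\<^sub>R T w = T (A w + \<epsilon> *\<^sub>R w)" by (simp add: TA bcl_add[OF bT] bcl_scaleR[OF bT])
    also have "\<dots> = B (B y)" by (simp add: w BB)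
    finally show ?thesis .
  qed
  obtain z where z: "B z + \<epsilon> *\<^sub>R z = y" using shift_surj[OF pB e] by blast
  define u where "u = \<epsilon> *\<^sub>R B z"
  have 6: "B u + \<epsilon> *\<^sub>R u = \<epsilon> *\<^sub>R B y"
  proof -
    have "B u + \<epsilon> *\<^sub>R u = \<epsilon> *\<^sub>R (B (B z) + \<epsilon> *\<^sub>R B z)"
      by (simp add: u_def bcl_scaleR[OF bB] scaleR_add_right)
    also have "\<dots> = \<epsilon> *\<^sub>R B y" by (simp add: z[symmetric] bcl_add[OF bB] bcl_scaleR[OF bB])
    finally show ?thesis .
  qed
  have 7: "B (B y - T w) + \<epsilon> *\<^sub>R (B y - T w) = \<epsilon> *\<^sub>R B y"
  proof -
    have "B (B y - T w) + \<epsilon> *\<^sub>R (B y - T w) = B (B y) + \<epsilon> *\<^sub>R B y - (B (T w) + \<epsilon> *\<^sub>R T w)"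
      by (simp add: bcl_diff[OF bB] scaleR_diff_right algebra_simps)
    then show ?thesis using 5 by simp
  qed
  have 8: "B y - T w = u" using shift_inj[OF pB e] 6 7 by metis
  have 9: "cinner y (T w) = cinner y (B y) - cinner y u"
  proof -
    have "T w = B y - u" using 8 by (simp add: algebra_simps)
    then show ?thesis by (simp add: cinner_diff_right)
  qed
  have 10: "0 \<le> Re (cinner y u)"
  proof -
    have "cinner y u = cinner (B z + \<epsilon> *\<^sub>R z) (\<epsilon> *\<^sub>R B z)" by (simp add: z u_def)
    also have "\<dots> = of_real \<epsilon> * (cinner (B z) (B z) + of_real \<epsilon> * cinner z (B z))"
      by (simp add: cinner_add_left cinner_scaleR_left cinner_scaleR_right algebra_simps)
    finally have "Re (cinner y u) = \<epsilon> * ((norm (B z))\<^sup>2 + \<epsilon> * Re (cinner z (B z)))"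
      by (simp add: Re_cinner_self)
    moreover have "Re (cinner z (B z)) \<ge> 0"
      using sB pB by (simp add: selfadj_def positive_op_def)
    ultimately show ?thesis using e by simp
  qed
  have 11: "Re (cinner y (B y)) = Re (cinner (B y) y)" using sB by (simp add: selfadj_def)
  have "Re (cinner (Ae w) w) \<le> Re (cinner (B y) y)" using 4 9 10 11 by simp
  moreover have "0 \<le> Re (cinner (Ae x) x)" using pAe by (simp add: posf_def)
  ultimately have "Re (cinner (Ae x) x) * Re (cinner (Ae w) w) \<le> Re (cinner (Ae x) x) * Re (cinner (B y) y)"
    by (rule mult_left_mono)
  then show "(cmod (cinner (T x) y))\<^sup>2 \<le> (Re (cinner (A x) x) + \<epsilon> * (norm x)\<^sup>2) * Re (cinner (B y) y)"
    using 1 2 3 by simp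
qed



lemma cs_real2:
  fixes a b p q :: real
  assumes "0 \<le> a" "0 \<le> b" "0 \<le> p" "0 \<le> q"
  shows "a * b + p * q \<le> sqrt (a\<^sup>2 + p\<^sup>2) * sqrt (b\<^sup>2 + q\<^sup>2)"
proof -
  have e: "(a * b + p * q)\<^sup>2 + (a * q - p * b)\<^sup>2 = (a\<^sup>2 + p\<^sup>2) * (b\<^sup>2 + q\<^sup>2)"
    by (simp add: power2_eq_square algebra_simps)
  have "(a * b + p * q)\<^sup>2 \<le> (a\<^sup>2 + p\<^sup>2) * (b\<^sup>2 + q\<^sup>2)"
    using e zero_le_power2[of "a * q - p * b"] by linarith
  then have "a * b + p * q \<le> sqrt ((a\<^sup>2 + p\<^sup>2) * (b\<^sup>2 + q\<^sup>2))" by (rule real_le_rsqrt)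
  then show ?thesis by (simp add: real_sqrt_mult)
qed

lemma amgm2: "(s::real) * t \<le> (s\<^sup>2 + t\<^sup>2) / 2"
proof -
  have "(s - t)\<^sup>2 = s\<^sup>2 - 2 * (s * t) + t\<^sup>2" by (simp add: power2_eq_square algebra_simps)
  then have "2 * (s * t) \<le> s\<^sup>2 + t\<^sup>2" using zero_le_power2[of "s - t"] by linarith
  then show ?thesis by (simp add: field_simps)
qed

lemma pointwise:
  fixes T A B :: "'a::chilbert_space \<Rightarrow> 'a"
  assumes bT: "bounded_clinear T" and pA: "positive_op A" and pB: "positive_op B"
    and TA: "\<And>x. T (A x) = B (T x)"
    and BB: "\<And>x. B (B x) = T (adj T x)"
    and nx: "norm x = 1"
  shows "(cmod (cinner (T x) x))\<^sup>2 + cmod (cinner (A (B x)) x - cinner (A x) x * cinner (B x) x)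
      \<le> onorm (\<lambda>x. A (A x) + B (B x)) / 2"
proof -
  have bA: "bounded_clinear A" and bB: "bounded_clinear B" using pA pB by (simp_all add: positive_bcl)
  have sA: "selfadj A" and sB: "selfadj B" using pA pB by (simp_all add: positive_selfadj)
  define a where "a = Re (cinner (A x) x)"
  define b where "b = Re (cinner (B x) x)"
  have a0: "0 \<le> a" and b0: "0 \<le> b" using pA pB unfolding a_def b_def by (simp_all add: positive_op_def)
  have ca: "cinner (A x) x = of_real a" unfolding a_def by (rule selfadj_real'[OF sA])
  have cb: "cinner (B x) x = of_real b" unfolding b_def by (rule selfadj_real'[OF sB])
  have xx: "cinner x x = 1" using nx by (simp add: cinner_self_eq)
  define u where "u = A x - a *\<^sub>R x"
  define v where "v = B x - b *\<^sub>R x"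
  have ux: "cinner u x = 0" unfolding u_def by (simp add: cinner_diff_left cinner_scaleR_left ca xx)
  have xu: "cinner x u = 0" using cinner_conj_sym[of x u] ux by simp
  have vx: "cinner v x = 0" unfolding v_def by (simp add: cinner_diff_left cinner_scaleR_left cb xx)
  have Ax: "A x = a *\<^sub>R x + u" and Bx: "B x = b *\<^sub>R x + v" by (simp_all add: u_def v_def)
  have e1: "cinner (A (B x)) x = cinner (B x) (A x)" using sA by (simp add: selfadj_def)
  have e2: "cinner (B x) (A x) = of_real (a * b) + cinner v u"
    unfolding Ax Bx
    by (simp add: cinner_add_left cinner_add_right cinner_scaleR_left cinner_scaleR_right xx xu vx)
  have diff: "cinner (A (B x)) x - cinner (A x) x * cinner (B x) x = cinner v u"
    unfolding e1 e2 ca cb by simp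
  have nA: "(norm (A x))\<^sup>2 = a\<^sup>2 + (norm u)\<^sup>2"
  proof -
    have "cinner (A x) (A x) = of_real (a\<^sup>2) + cinner u u" unfolding Ax
      by (simp add: cinner_add_left cinner_add_right cinner_scaleR_left cinner_scaleR_right xx xu ux
          power2_eq_square)
    then have "Re (cinner (A x) (A x)) = Re (of_real (a\<^sup>2) + cinner u u)" by (rule arg_cong)
    then show ?thesis by (simp add: Re_cinner_self)
  qed
  have nB: "(norm (B x))\<^sup>2 = b\<^sup>2 + (norm v)\<^sup>2"
  proof -
    have xv: "cinner x v = 0" using cinner_conj_sym[of x v] vx by simp
    have "cinner (B x) (B x) = of_real (b\<^sup>2) + cinner v v" unfolding Bx
      by (simp add: cinner_add_left cinner_add_right cinner_scaleR_left cinner_scaleR_right xx xv vx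
          power2_eq_square)
    then have "Re (cinner (B x) (B x)) = Re (of_real (b\<^sup>2) + cinner v v)" by (rule arg_cong)
    then show ?thesis by (simp add: Re_cinner_self)
  qed
  have ms: "(cmod (cinner (T x) x))\<^sup>2 \<le> a * b"
    unfolding a_def b_def by (rule mixed_schwarz[OF bT pA pB TA BB])
  have "cmod (cinner v u) \<le> norm v * norm u" by (rule cauchy_schwarz)
  then have "(cmod (cinner (T x) x))\<^sup>2 + cmod (cinner (A (B x)) x - cinner (A x) x * cinner (B x) x)
      \<le> a * b + norm u * norm v" using ms unfolding diff by (simp add: mult.commute)
  also have "\<dots> \<le> sqrt (a\<^sup>2 + (norm u)\<^sup>2) * sqrt (b\<^sup>2 + (norm v)\<^sup>2)" by (rule cs_real2) (simp_all add: a0 b0)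
  also have "\<dots> = norm (A x) * norm (B x)" unfolding nA[symmetric] nB[symmetric] by simp
  also have "\<dots> \<le> ((norm (A x))\<^sup>2 + (norm (B x))\<^sup>2) / 2" by (rule amgm2)
  also have "(norm (A x))\<^sup>2 + (norm (B x))\<^sup>2 = Re (cinner (A (A x) + B (B x)) x)"
  proof -
    have "cinner (A x) (A x) = cinner (A (A x)) x" "cinner (B x) (B x) = cinner (B (B x)) x"
      using sA sB by (simp_all add: selfadj_def)
    then show ?thesis by (simp add: cinner_add_left Re_cinner_self[symmetric])
  qed
  also have "\<dots> \<le> norm (A (A x) + B (B x)) * norm x" by (rule Re_cinner_le)
  also have "\<dots> \<le> onorm (\<lambda>x. A (A x) + B (B x))"
  proof -
    have bl: "bounded_linear (\<lambda>x. A (A x) + B (B x))"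
      by (rule bcl_bounded_linear[OF bcl_add_op[OF bcl_comp[OF bA bA] bcl_comp[OF bB bB]]])
    show ?thesis using onorm[OF bl, of x] nx by simp
  qed
  finally show ?thesis by (simp add: divide_right_mono)
qed

theorem corollary4p2:
  fixes T :: "'a::chilbert_space \<Rightarrow> 'a"
  assumes "bounded_clinear T"
    and "\<exists>x::'a. x \<noteq> 0"
  shows "(numerical_radius T)\<^sup>2 +
      (INF x\<in>{x::'a. norm x = 1}.
         cmod (cinner (abs_op T (abs_op (adj T) x)) x
               - cinner (abs_op T x) x * cinner (abs_op (adj T) x) x))
    \<le> onorm (\<lambda>x. abs_op T (abs_op T x) + abs_op (adj T) (abs_op (adj T) x)) / 2"
proof -
  have bT: "bounded_clinear T" by (rule assms(1))
  define A where "A = abs_op T"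
  define B where "B = abs_op (adj T)"
  define P1 where "P1 = adj T \<circ> T"
  define P2 where "P2 = T \<circ> adj T"
  have p1: "positive_op P1" unfolding P1_def by (rule adjT_T_positive[OF bT])
  have p2: "positive_op P2" unfolding P2_def using adjT_T_positive[OF adj_bcl[OF bT]] adj_adj[OF bT] by simp
  have A1: "A = op_sqrt P1" unfolding A_def abs_op_def P1_def ..
  have B1: "B = op_sqrt P2" unfolding B_def abs_op_def P2_def adj_adj[OF bT] ..
  have pA: "positive_op A" unfolding A1 by (rule op_sqrt_props(1)[OF p1])
  have pB: "positive_op B" unfolding B1 by (rule op_sqrt_props(1)[OF p2])
  have TA: "T (A x) = B (T x)" for x unfolding A1 B1
    by (rule op_sqrt_intertwine[OF p1 p2 bT]) (simp add: P1_def P2_def)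
  have BB: "B (B x) = T (adj T x)" for x unfolding B1 using op_sqrt_props(2)[OF p2] by (simp add: P2_def)
  define f where "f x = cmod (cinner (T x) x)" for x
  define g where "g x = cmod (cinner (A (B x)) x - cinner (A x) x * cinner (B x) x)" for x
  define Nn where "Nn = onorm (\<lambda>x. A (A x) + B (B x))"
  define U where "U = {x::'a. norm x = 1}"
  have pw: "(f x)\<^sup>2 + g x \<le> Nn / 2" if "x \<in> U" for x
    using pointwise[OF bT pA pB TA BB] that unfolding f_def g_def Nn_def U_def by blast
  obtain x0 :: 'a where x0: "x0 \<noteq> 0" using assms(2) by blast
  define x1 where "x1 = (1 / norm x0) *\<^sub>R x0"
  have x1U: "x1 \<in> U" unfolding U_def x1_def using x0 by simp
  then have Une: "U \<noteq> {}" by blast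
  define I where "I = (INF x\<in>U. g x)"
  have bddg: "bdd_below (g ` U)" unfolding g_def by (rule bdd_belowI[of _ 0]) auto
  have Ile: "I \<le> g x" if "x \<in> U" for x unfolding I_def by (rule cINF_lower[OF bddg that])
  have fle: "(f x)\<^sup>2 \<le> Nn / 2 - I" if "x \<in> U" for x using pw[OF that] Ile[OF that] by linarith
  have fs: "f x \<le> sqrt (Nn / 2 - I)" if "x \<in> U" for x
  proof -
    have "f x \<le> sqrt ((f x)\<^sup>2)" by (simp add: f_def)
    also have "\<dots> \<le> sqrt (Nn / 2 - I)" using fle[OF that] by (rule real_sqrt_le_mono)
    finally show ?thesis .
  qed
  have bddf: "bdd_above (f ` U)" using fs by (intro bdd_aboveI[of _ "sqrt (Nn / 2 - I)"]) auto
  have w: "numerical_radius T = (SUP x\<in>U. f x)" unfolding numerical_radius_def U_def f_def ..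
  have wle: "numerical_radius T \<le> sqrt (Nn / 2 - I)" unfolding w by (rule cSUP_least[OF Une fs])
  have w0: "0 \<le> numerical_radius T"
  proof -
    have "f x1 \<le> (SUP x\<in>U. f x)" by (rule cSUP_upper[OF x1U bddf])
    moreover have "0 \<le> f x1" by (simp add: f_def)
    ultimately show ?thesis unfolding w by linarith
  qed
  have nn: "0 \<le> Nn / 2 - I" using fle[OF x1U] zero_le_power2[of "f x1"] by linarith
  have "(numerical_radius T)\<^sup>2 \<le> (sqrt (Nn / 2 - I))\<^sup>2" by (rule power_mono[OF wle w0])
  also have "\<dots> = Nn / 2 - I" using nn by simp
  finally have "(numerical_radius T)\<^sup>2 + I \<le> Nn / 2" by linarith
  then show ?thesis unfolding I_def g_def Nn_def U_def A_def B_def .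
qed


end
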